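(* Fix $X\in\mathcal{E}$ and let $I$ be the (extended) Daniell integral associated with $X$. Let $f\in C(\mathbb{R})$ be a positive continuous function with bounded support. Then $f\in\mathbb{L}^\uparrow$ and $I(f)=f\circ X\in\mathcal{E}_+$.
   Context: Let $\mathcal{E}$ be an order complete vector lattice with a weak order unit $E$, $K$ its Stone space (extremally disconnected compact Hausdorff), and $C^\infty(K)$ the vector lattice of continuous functions $K\to[-\infty,\infty]$ finite off a nowhere dense set (identified when equal off a nowhere dense set), which is the universal completion $\mathcal{E}^u$. Fix a Maeda–Ogasawara representation of $\mathcal{E}$ as an order dense ideal of $C^\infty(K)$ with $E$ corresponding to $\mathbf{1}$. The sup-completion is $\mathcal{E}^s=\{f\in C(K,[-\infty,\infty]): f\ge g\text{ for some } g\in\mathcal{E}\}$. For $Y\in\mathcal{E}$, $P_Y$ denotes the band projection onto the band generated by $Y$. For a continuous $f:\mathbb{R}\to\mathbb{R}$ and $X\in C^\infty(K)$, $f\circ X$ denotes the unique element of $C^\infty(K)$ that agrees with $\omega\mapsto f(X(\omega))$ on the open dense set where $X$ is finite. Daniell calculus: $F(\mathbb{R})$ is the algebra of finite disjoint unions of intervals $(a,b]$, $(a,\infty)$, $(-\infty,b]$ ($a,b\in\mathbb{R}$), and $\mathbb{L}$ is the vector lattice of functions $f=\sum_{i=1}^n a_i\mathbf{1}_{S_i}$ with $a_i\in\mathbb{R}$ and $(S_i)$ a partition of $\mathbb{R}$ into sets of $F(\mathbb{R})$. For fixed $X\in\mathcal{E}$ the spectral system is $A_t=E-P_{(X-tE)^+}E$,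 with $A_\infty=\sup_tA_t$, $A_{-\infty}=\inf_tA_t$; the measure $\mu_A$ is $\mu_A(a,b]=A_b-A_a$, $\mu_A(a,\infty)=A_\infty-A_a$, $\mu_A(-\infty,b]=A_b-A_{-\infty}$, extended additively; the Daniell integral associated with $X$ is $I(f)=\sum_i a_i\mu_A(S_i)$ for $f=\sum_ia_i\mathbf{1}_{S_i}\in\mathbb{L}$. $\mathbb{L}^\uparrow$ is the set of $f:\mathbb{R}\to\overline{\mathbb{R}}$ for which there is a sequence $(f_n)\subseteq\mathbb{L}$ with $f_n(t)\uparrow f(t)$ for every $t$, and for such $f$, $I(f)=\sup_nI(f_n)\in\mathcal{E}^s$ (this is independent of the chosen sequence). *)

theory Defs
  imports "HOL-Analysis.Analysis" "HOL-Library.Extended_Real"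
begin

text \<open>K is the carrier type 'k (compact Hausdorff, extremally disconnected, assumed in the
theorem). Since two continuous extended-real functions that agree off a nowhere dense
set agree everywhere, the identification is equality, and the order (off nowhere dense sets)
is the pointwise order on functions.\<close>

definition nowhere_dense :: "'a::topological_space set \<Rightarrow> bool" where
  "nowhere_dense S \<longleftrightarrow> interior (closure S) = {}"

definition Cinf :: "('k::topological_space \<Rightarrow> ereal) set" where
  "Cinf = {g. continuous_on UNIV g \<and> nowhere_dense {w. \<bar>g w\<bar> = \<infinity>}}"

definition czero :: "'k \<Rightarrow> ereal" where "czero = (\<lambda>_. 0)"
definition cone :: "'k \<Rightarrow> ereal" where "cone = (\<lambda>_. 1)"

definition cadd :: "('k::topological_space \<Rightarrow> ereal) \<Rightarrow> ('k \<Rightarrow> ereal) \<Rightarrow> ('k \<Rightarrow> ereal)" where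
  "cadd g h = (THE u. u \<in> Cinf \<and> (\<forall>w. \<bar>g w\<bar> \<noteq> \<infinity> \<and> \<bar>h w\<bar> \<noteq> \<infinity> \<longrightarrow> u w = g w + h w))"

definition csmul :: "real \<Rightarrow> ('k \<Rightarrow> ereal) \<Rightarrow> ('k \<Rightarrow> ereal)" where
  "csmul c g = (\<lambda>w. ereal c * g w)"

definition csub :: "('k::topological_space \<Rightarrow> ereal) \<Rightarrow> ('k \<Rightarrow> ereal) \<Rightarrow> ('k \<Rightarrow> ereal)" where
  "csub g h = cadd g (\<lambda>w. - h w)"

definition cabs :: "('k \<Rightarrow> ereal) \<Rightarrow> ('k \<Rightarrow> ereal)" where
  "cabs g = (\<lambda>w. \<bar>g w\<bar>)"

definition cinf :: "('k \<Rightarrow> ereal) \<Rightarrow> ('k \<Rightarrow> ereal) \<Rightarrow> ('k \<Rightarrow> ereal)" where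
  "cinf g h = (\<lambda>w. min (g w) (h w))"

definition is_lub_in :: "('k \<Rightarrow> ereal) set \<Rightarrow> ('k \<Rightarrow> ereal) set \<Rightarrow> ('k \<Rightarrow> ereal) \<Rightarrow> bool" where
  "is_lub_in V S u \<longleftrightarrow> u \<in> V \<and> (\<forall>s\<in>S. s \<le> u) \<and> (\<forall>v\<in>V. (\<forall>s\<in>S. s \<le> v) \<longrightarrow> u \<le> v)"

definition is_glb_in :: "('k \<Rightarrow> ereal) set \<Rightarrow> ('k \<Rightarrow> ereal) set \<Rightarrow> ('k \<Rightarrow> ereal) \<Rightarrow> bool" where
  "is_glb_in V S u \<longleftrightarrow> u \<in> V \<and> (\<forall>s\<in>S. u \<le> s) \<and> (\<forall>v\<in>V. (\<forall>s\<in>S. v \<le> s) \<longrightarrow> v \<le> u)"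

definition ideal_in :: "('k::topological_space \<Rightarrow> ereal) set \<Rightarrow> ('k \<Rightarrow> ereal) set \<Rightarrow> bool" where
  "ideal_in V B \<longleftrightarrow> B \<subseteq> V \<and> czero \<in> B \<and> (\<forall>g\<in>B. \<forall>h\<in>B. cadd g h \<in> B)
     \<and> (\<forall>c. \<forall>g\<in>B. csmul c g \<in> B)
     \<and> (\<forall>g\<in>V. \<forall>h\<in>B. cabs g \<le> cabs h \<longrightarrow> g \<in> B)"

definition band_in :: "('k::topological_space \<Rightarrow> ereal) set \<Rightarrow> ('k \<Rightarrow> ereal) set \<Rightarrow> bool" where
  "band_in V B \<longleftrightarrow> ideal_in V B \<and> (\<forall>S u. S \<subseteq> B \<longrightarrow> is_lub_in V S u \<longrightarrow> u \<in> B)"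

definition band_gen :: "('k::topological_space \<Rightarrow> ereal) set \<Rightarrow> ('k \<Rightarrow> ereal) \<Rightarrow> ('k \<Rightarrow> ereal) set" where
  "band_gen V Y = \<Inter>{B. band_in V B \<and> Y \<in> B}"

definition disj_compl :: "('k \<Rightarrow> ereal) set \<Rightarrow> ('k \<Rightarrow> ereal) set \<Rightarrow> ('k \<Rightarrow> ereal) set" where
  "disj_compl V B = {g\<in>V. \<forall>h\<in>B. cinf (cabs g) (cabs h) = czero}"

definition band_proj :: "('k::topological_space \<Rightarrow> ereal) set \<Rightarrow> ('k \<Rightarrow> ereal) \<Rightarrow> ('k \<Rightarrow> ereal) \<Rightarrow> ('k \<Rightarrow> ereal)" where
  "band_proj V Y Z = (THE P. P \<in> band_gen V Y \<and>
      (\<exists>W\<in>disj_compl V (band_gen V Y). Z = cadd P W))"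

definition specA :: "('k::topological_space \<Rightarrow> ereal) set \<Rightarrow> ('k \<Rightarrow> ereal) \<Rightarrow> real \<Rightarrow> ('k \<Rightarrow> ereal)" where
  "specA V X t = csub cone (band_proj V (\<lambda>w. max (X w - ereal t) 0) cone)"

definition specA_top :: "('k::topological_space \<Rightarrow> ereal) set \<Rightarrow> ('k \<Rightarrow> ereal) \<Rightarrow> ('k \<Rightarrow> ereal)" where
  "specA_top V X = (THE u. is_lub_in V (range (specA V X)) u)"

definition specA_bot :: "('k::topological_space \<Rightarrow> ereal) set \<Rightarrow> ('k \<Rightarrow> ereal) \<Rightarrow> ('k \<Rightarrow> ereal)" where
  "specA_bot V X = (THE u. is_glb_in V (range (specA V X)) u)"

datatype ivl = OC real real | Ray real | Low real

fun ivl_set :: "ivl \<Rightarrow> real set" where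
  "ivl_set (OC a b) = {a<..b}"
| "ivl_set (Ray a) = {a<..}"
| "ivl_set (Low b) = {..b}"

fun ivl_ok :: "ivl \<Rightarrow> bool" where
  "ivl_ok (OC a b) \<longleftrightarrow> a < b"
| "ivl_ok (Ray a) \<longleftrightarrow> True"
| "ivl_ok (Low b) \<longleftrightarrow> True"

fun muA :: "('k::topological_space \<Rightarrow> ereal) set \<Rightarrow> ('k \<Rightarrow> ereal) \<Rightarrow> ivl \<Rightarrow> ('k \<Rightarrow> ereal)" where
  "muA V X (OC a b) = csub (specA V X b) (specA V X a)"
| "muA V X (Ray a) = csub (specA_top V X) (specA V X a)"
| "muA V X (Low b) = csub (specA V X b) (specA_bot V X)"

text \<open>A representation of a step function g in L: g = sum_k c_k 1_{J_k}, where the J_k are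
basic intervals partitioning R (this is a partition into sets of F(R) refined into its
constituent intervals; mu_A on F(R) is the additive extension).\<close>
definition step_rep :: "(real \<times> ivl) list \<Rightarrow> (real \<Rightarrow> real) \<Rightarrow> bool" where
  "step_rep R g \<longleftrightarrow>
     (\<forall>i<length R. ivl_ok (snd (R ! i)))
   \<and> (\<forall>i<length R. \<forall>j<length R. i \<noteq> j \<longrightarrow> ivl_set (snd (R ! i)) \<inter> ivl_set (snd (R ! j)) = {})
   \<and> (\<Union>i<length R. ivl_set (snd (R ! i))) = UNIV
   \<and> g = (\<lambda>t. \<Sum>i<length R. if t \<in> ivl_set (snd (R ! i)) then fst (R ! i) else 0)"

definition Lspace :: "(real \<Rightarrow> real) set" where
  "Lspace = {g. \<exists>R. step_rep R g}"

definition rep_val :: "('k::topological_space \<Rightarrow> ereal) set \<Rightarrow> ('k \<Rightarrow> ereal) \<Rightarrow> (real \<times> ivl) list \<Rightarrow> ('k \<Rightarrow> ereal)" where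
  "rep_val V X R = foldr (\<lambda>(c, J) acc. cadd (csmul c (muA V X J)) acc) R czero"

definition DI :: "('k::topological_space \<Rightarrow> ereal) set \<Rightarrow> ('k \<Rightarrow> ereal) \<Rightarrow> (real \<Rightarrow> real) \<Rightarrow> ('k \<Rightarrow> ereal)" where
  "DI V X g = (THE v. \<forall>R. step_rep R g \<longrightarrow> v = rep_val V X R)"

definition approx_up :: "(nat \<Rightarrow> real \<Rightarrow> real) \<Rightarrow> (real \<Rightarrow> ereal) \<Rightarrow> bool" where
  "approx_up fs F \<longleftrightarrow> (\<forall>n. fs n \<in> Lspace) \<and>
     (\<forall>t. incseq (\<lambda>n. ereal (fs n t)) \<and> (\<lambda>n. ereal (fs n t)) \<longlonglongrightarrow> F t)"

definition Lup :: "(real \<Rightarrow> ereal) set" where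
  "Lup = {F. \<exists>fs. approx_up fs F}"

definition Es :: "('k::topological_space \<Rightarrow> ereal) set \<Rightarrow> ('k \<Rightarrow> ereal) set" where
  "Es V = {g. continuous_on UNIV g \<and> (\<exists>h\<in>V. h \<le> g)}"

definition fcomp :: "(real \<Rightarrow> real) \<Rightarrow> ('k::topological_space \<Rightarrow> ereal) \<Rightarrow> ('k \<Rightarrow> ereal)" where
  "fcomp f X = (THE g. g \<in> Cinf \<and> (\<forall>w. \<bar>X w\<bar> \<noteq> \<infinity> \<longrightarrow> g w = ereal (f (real_of_ereal (X w)))))"

end

theory Submission
  imports Defs
begin

lemma ext_lemma:
  fixes D :: "'k::topological_space set" and \<phi> :: "'k \<Rightarrow> ereal"
  assumes ed: "\<forall>U::'k set. open U \<longrightarrow> open (closure U)"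
    and dense: "closure D = UNIV" and cont: "continuous_on D \<phi>"
  shows "\<exists>F. continuous_on UNIV F \<and> (\<forall>x\<in>D. F x = \<phi> x)"
proof -
  define U where "U r = {x\<in>D. \<phi> x < ereal r}" for r
  define Cl where "Cl r = closure (U r)" for r
  define F where "F w = Inf {ereal r | r. w \<in> Cl r}" for w
  have mono: "Cl r \<subseteq> Cl s" if "r \<le> s" for r s
    unfolding Cl_def U_def using that by (intro closure_mono) (auto intro: order.strict_trans2)
  have opn: "open (Cl r)" for r
  proof -
    obtain G where G: "open G" "G \<inter> D = \<phi> -` {..<ereal r} \<inter> D"
      using cont unfolding continuous_on_open_invariant by (meson open_lessThan)
    have "U r = G \<inter> D" using G(2) unfolding U_def by auto
    moreover have "closure (G \<inter> D) = closure G"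
    proof
      show "closure (G \<inter> D) \<subseteq> closure G" by (simp add: closure_mono)
      have "G \<subseteq> closure (G \<inter> D)" using open_Int_closure_subset[OF G(1), of D] dense by simp
      then show "closure G \<subseteq> closure (G \<inter> D)" by (simp add: closure_minimal)
    qed
    ultimately show ?thesis unfolding Cl_def using ed G(1) by simp
  qed
  have low: "ereal s \<le> F y" if "y \<notin> Cl s" for y s
    unfolding F_def
  proof (rule Inf_greatest, clarsimp)
    fix r assume "y \<in> Cl r"
    show "s \<le> r"
    proof (rule ccontr)
      assume "\<not> s \<le> r" then have "Cl r \<subseteq> Cl s" using mono by simp
      then show False using that \<open>y \<in> Cl r\<close> by auto
    qed
  qed
  have up: "F y \<le> ereal r" if "y \<in> Cl r" for y r
    unfolding F_def using that by (intro Inf_lower) auto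
  have "continuous_on UNIV F"
    unfolding continuous_on_def
  proof (intro ballI order_tendstoI)
    fix x :: 'k and a assume "a < F x"
    then obtain s where s: "a < ereal s" "ereal s < F x" using ereal_dense2 by blast
    then have "x \<notin> Cl s" using up by (meson leD)
    moreover have "open (- Cl s)" unfolding Cl_def by auto
    ultimately have "\<forall>\<^sub>F y in at x within UNIV. y \<in> - Cl s"
      by (intro eventually_at_topological[THEN iffD2]) blast
    then show "\<forall>\<^sub>F y in at x within UNIV. a < F y"
      by eventually_elim (meson ComplD low s(1) less_le_trans)
  next
    fix x :: 'k and b assume "F x < b"
    then obtain e where e: "e \<in> {ereal r | r. x \<in> Cl r}" "e < b" unfolding F_def Inf_less_iff by blast
    then obtain r where r: "e = ereal r" "x \<in> Cl r" by auto
    have "\<forall>\<^sub>F y in at x within UNIV. y \<in> Cl r"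
      using opn r(2) by (intro eventually_at_topological[THEN iffD2]) blast
    then show "\<forall>\<^sub>F y in at x within UNIV. F y < b"
      by eventually_elim (metis up e(2) r(1) le_less_trans)
  qed
  moreover have "\<forall>x\<in>D. F x = \<phi> x"
  proof
    fix x assume xD: "x \<in> D"
    have "F x \<le> \<phi> x"
    proof (rule dense_ge)
      fix y assume "\<phi> x < y"
      show "F x \<le> y"
      proof (cases y)
        case (real r)
        then have "x \<in> U r" using xD \<open>\<phi> x < y\<close> unfolding U_def by simp
        then have "x \<in> Cl r" unfolding Cl_def using closure_subset by blast
        then show ?thesis using up real by simp
      qed (use \<open>\<phi> x < y\<close> in auto)
    qed
    moreover have "\<phi> x \<le> F x"
      unfolding F_def
    proof (rule Inf_greatest, clarsimp)
      fix r assume xr: "x \<in> Cl r"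
      show "\<phi> x \<le> ereal r"
      proof (rule ccontr)
        assume "\<not> \<phi> x \<le> ereal r"
        then have gt: "ereal r < \<phi> x" by simp
        obtain G where G: "open G" "G \<inter> D = \<phi> -` {ereal r<..} \<inter> D"
          using cont unfolding continuous_on_open_invariant by (meson open_greaterThan)
        have "G \<inter> U r = {}"
        proof (rule ccontr)
          assume "G \<inter> U r \<noteq> {}"
          then obtain y where y: "y \<in> G" "y \<in> D" "\<phi> y < ereal r" unfolding U_def by auto
          then have "y \<in> \<phi> -` {ereal r<..} \<inter> D" using G(2) by blast
          then have "ereal r < \<phi> y" by simp
          then show False using y(3) by (meson less_asym)
        qed
        then have "G \<inter> Cl r = {}" unfolding Cl_def using open_Int_closure_eq_empty[OF G(1)] by simp
        moreover have "x \<in> G" using G(2) xD gt by blast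
        ultimately show False using xr by auto
      qed
    qed
    ultimately show "F x = \<phi> x" by simp
  qed
  ultimately show ?thesis by blast
qed


lemma dense_eq:
  fixes u v :: "'k::topological_space \<Rightarrow> ereal"
  assumes "continuous_on UNIV u" "continuous_on UNIV v" "closure D = UNIV" "\<forall>x\<in>D. u x = v x"
  shows "u = v"
proof -
  have "closed {x. u x = v x}" using closed_Collect_eq[OF assms(1,2)] .
  moreover have "D \<subseteq> {x. u x = v x}" using assms(4) by auto
  ultimately have "closure D \<subseteq> {x. u x = v x}" by (simp add: closure_minimal)
  then show ?thesis using assms(3) by auto
qed

lemma dense_le:
  fixes u v :: "'k::topological_space \<Rightarrow> ereal"
  assumes "continuous_on UNIV u" "continuous_on UNIV v" "closure D = UNIV" "\<forall>x\<in>D. u x \<le> v x"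
  shows "\<forall>x. u x \<le> v x"
proof -
  have "closed {x. u x \<le> v x}" using closed_Collect_le[OF assms(1,2)] .
  moreover have "D \<subseteq> {x. u x \<le> v x}" using assms(4) by auto
  ultimately have "closure D \<subseteq> {x. u x \<le> v x}" by (simp add: closure_minimal)
  then show ?thesis using assms(3) by auto
qed

lemma Cinf_cont: "g \<in> Cinf \<Longrightarrow> continuous_on UNIV g"
  unfolding Cinf_def by simp

lemma inf_set_closed:
  fixes g :: "'k::topological_space \<Rightarrow> ereal"
  assumes "continuous_on UNIV g"
  shows "closed {w. \<bar>g w\<bar> = \<infinity>}"
proof -
  have "{w. \<bar>g w\<bar> = \<infinity>} = {w. g w = (\<lambda>_. \<infinity>) w} \<union> {w. g w = (\<lambda>_. -\<infinity>) w}" by auto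
  moreover have "closed {w. g w = (\<lambda>_. \<infinity>) w}" "closed {w. g w = (\<lambda>_. -\<infinity>) w}"
    using closed_Collect_eq[OF assms continuous_on_const] by auto
  ultimately show ?thesis by auto
qed

lemma Cinf_inf_interior:
  fixes g :: "'k::topological_space \<Rightarrow> ereal"
  assumes "g \<in> Cinf" shows "interior {w. \<bar>g w\<bar> = \<infinity>} = {}"
proof -
  have c: "closed {w. \<bar>g w\<bar> = \<infinity>}" using inf_set_closed Cinf_cont assms by blast
  then show ?thesis using assms unfolding Cinf_def nowhere_dense_def by (simp add: closure_closed)
qed

lemma Cinf_dense:
  fixes g :: "'k::topological_space \<Rightarrow> ereal"
  assumes "g \<in> Cinf" shows "closure {w. \<bar>g w\<bar> \<noteq> \<infinity>} = UNIV"
proof -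
  have "{w. \<bar>g w\<bar> \<noteq> \<infinity>} = - {w. \<bar>g w\<bar> = \<infinity>}" by auto
  then show ?thesis using Cinf_inf_interior[OF assms] by (simp add: closure_interior)
qed

lemma Cinf_dense2:
  fixes g h :: "'k::topological_space \<Rightarrow> ereal"
  assumes "g \<in> Cinf" "h \<in> Cinf"
  shows "closure {w. \<bar>g w\<bar> \<noteq> \<infinity> \<and> \<bar>h w\<bar> \<noteq> \<infinity>} = UNIV"
    and "interior ({w. \<bar>g w\<bar> = \<infinity>} \<union> {w. \<bar>h w\<bar> = \<infinity>}) = {}"
proof -
  show i: "interior ({w. \<bar>g w\<bar> = \<infinity>} \<union> {w. \<bar>h w\<bar> = \<infinity>}) = {}"
    using interior_closed_Un_empty_interior[OF inf_set_closed[OF Cinf_cont[OF assms(1)]] Cinf_inf_interior[OF assms(2)]]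
      Cinf_inf_interior[OF assms(1)] by simp
  have "{w. \<bar>g w\<bar> \<noteq> \<infinity> \<and> \<bar>h w\<bar> \<noteq> \<infinity>} = - ({w. \<bar>g w\<bar> = \<infinity>} \<union> {w. \<bar>h w\<bar> = \<infinity>})" by auto
  then show "closure {w. \<bar>g w\<bar> \<noteq> \<infinity> \<and> \<bar>h w\<bar> \<noteq> \<infinity>} = UNIV"
    using i by (simp add: closure_interior)
qed

lemma cadd_general:
  fixes g h :: "'k::t2_space \<Rightarrow> ereal"
  assumes ed: "\<forall>U::'k set. open U \<longrightarrow> open (closure U)"
    and g: "g \<in> Cinf" and h: "h \<in> Cinf"
  shows "cadd g h \<in> Cinf" "\<And>w. \<bar>g w\<bar> \<noteq> \<infinity> \<Longrightarrow> \<bar>h w\<bar> \<noteq> \<infinity> \<Longrightarrow> cadd g h w = g w + h w"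
proof -
  define D where "D = {w. \<bar>g w\<bar> \<noteq> \<infinity> \<and> \<bar>h w\<bar> \<noteq> \<infinity>}"
  have dD: "closure D = UNIV" unfolding D_def using Cinf_dense2[OF g h] by simp
  have cg: "continuous_on UNIV g" and ch: "continuous_on UNIV h" using g h Cinf_cont by auto
  have "continuous_on D (\<lambda>w. g w + h w)"
    unfolding continuous_on_def
  proof
    fix x assume "x \<in> D"
    then have fin: "\<bar>g x\<bar> \<noteq> \<infinity>" "\<bar>h x\<bar> \<noteq> \<infinity>" unfolding D_def by auto
    have "continuous_on D g" "continuous_on D h"
      using continuous_on_subset[OF cg] continuous_on_subset[OF ch] by auto
    then have "(g \<longlongrightarrow> g x) (at x within D)" "(h \<longlongrightarrow> h x) (at x within D)"
      using \<open>x \<in> D\<close> unfolding continuous_on_def by auto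
    then show "((\<lambda>w. g w + h w) \<longlongrightarrow> g x + h x) (at x within D)"
      by (rule tendsto_add_ereal[OF fin])
  qed
  then obtain F where F: "continuous_on UNIV F" "\<forall>x\<in>D. F x = g x + h x"
    using ext_lemma[OF ed dD] by blast
  have "{w. \<bar>F w\<bar> = \<infinity>} \<subseteq> {w. \<bar>g w\<bar> = \<infinity>} \<union> {w. \<bar>h w\<bar> = \<infinity>}"
  proof
    fix w assume w: "w \<in> {w. \<bar>F w\<bar> = \<infinity>}"
    show "w \<in> {w. \<bar>g w\<bar> = \<infinity>} \<union> {w. \<bar>h w\<bar> = \<infinity>}"
    proof (rule ccontr)
      assume "w \<notin> {w. \<bar>g w\<bar> = \<infinity>} \<union> {w. \<bar>h w\<bar> = \<infinity>}"
      then have wD: "w \<in> D" unfolding D_def by auto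
      then have "F w = g w + h w" using F(2) by auto
      moreover have "\<bar>g w + h w\<bar> \<noteq> \<infinity>" using wD unfolding D_def by (cases "g w"; cases "h w") auto
      ultimately show False using w by simp
    qed
  qed
  moreover have "closed ({w. \<bar>g w\<bar> = \<infinity>} \<union> {w. \<bar>h w\<bar> = \<infinity>})"
    using inf_set_closed cg ch by blast
  ultimately have "interior (closure {w. \<bar>F w\<bar> = \<infinity>}) = {}"
    using Cinf_dense2(2)[OF g h]
    by (metis (no_types, lifting) closure_minimal interior_mono subset_empty)
  then have FC: "F \<in> Cinf" unfolding Cinf_def nowhere_dense_def using F(1) by simp
  have ex: "F \<in> Cinf \<and> (\<forall>w. \<bar>g w\<bar> \<noteq> \<infinity> \<and> \<bar>h w\<bar> \<noteq> \<infinity> \<longrightarrow> F w = g w + h w)"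
    using FC F(2) unfolding D_def by auto
  have "cadd g h = F" unfolding cadd_def
  proof (rule the_equality)
    show "F \<in> Cinf \<and> (\<forall>w. \<bar>g w\<bar> \<noteq> \<infinity> \<and> \<bar>h w\<bar> \<noteq> \<infinity> \<longrightarrow> F w = g w + h w)" by (rule ex)
    fix u assume u: "u \<in> Cinf \<and> (\<forall>w. \<bar>g w\<bar> \<noteq> \<infinity> \<and> \<bar>h w\<bar> \<noteq> \<infinity> \<longrightarrow> u w = g w + h w)"
    show "u = F"
      by (rule dense_eq[OF Cinf_cont F(1) dD]) (use u F(2) in \<open>auto simp: D_def\<close>)
  qed
  then show "cadd g h \<in> Cinf" "\<And>w. \<bar>g w\<bar> \<noteq> \<infinity> \<Longrightarrow> \<bar>h w\<bar> \<noteq> \<infinity> \<Longrightarrow> cadd g h w = g w + h w"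
    using ex by auto
qed

lemma real_Cinf:
  fixes p :: "'k::topological_space \<Rightarrow> real"
  assumes "continuous_on UNIV p" shows "(\<lambda>w. ereal (p w)) \<in> Cinf"
  unfolding Cinf_def nowhere_dense_def using continuous_on_ereal[OF assms] by simp

lemma cadd_fin:
  fixes p q :: "'k::topological_space \<Rightarrow> real"
  assumes "continuous_on UNIV p" "continuous_on UNIV q"
  shows "cadd (\<lambda>w. ereal (p w)) (\<lambda>w. ereal (q w)) = (\<lambda>w. ereal (p w + q w))"
  unfolding cadd_def
proof (rule the_equality)
  have "continuous_on UNIV (\<lambda>w. p w + q w)" using assms by (intro continuous_intros)
  then show "(\<lambda>w. ereal (p w + q w)) \<in> Cinf \<and> (\<forall>w. \<bar>ereal (p w)\<bar> \<noteq> \<infinity> \<and> \<bar>ereal (q w)\<bar> \<noteq> \<infinity> \<longrightarrow> ereal (p w + q w) = ereal (p w) + ereal (q w))"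
    using real_Cinf by auto
next
  fix u assume u: "u \<in> Cinf \<and> (\<forall>w. \<bar>ereal (p w)\<bar> \<noteq> \<infinity> \<and> \<bar>ereal (q w)\<bar> \<noteq> \<infinity> \<longrightarrow> u w = ereal (p w) + ereal (q w))"
  show "u = (\<lambda>w. ereal (p w + q w))"
  proof
    fix w show "u w = ereal (p w + q w)" using u by simp
  qed
qed


definition ind :: "'a set \<Rightarrow> 'a \<Rightarrow> real" where
  "ind S w = (if w \<in> S then 1 else 0)"

lemma ind_cont:
  fixes S :: "'k::topological_space set"
  assumes "open S" "closed S" shows "continuous_on UNIV (ind S)"
proof -
  have "continuous_on (S \<union> - S) (\<lambda>w. if w \<in> S then (\<lambda>_. 1::real) w else (\<lambda>_. 0) w)"
    by (rule continuous_on_If) (use assms in \<open>auto intro: continuous_on_const\<close>)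
  moreover have "S \<union> - S = UNIV" by auto
  ultimately show ?thesis unfolding ind_def by simp
qed

lemma nowhere_dense_subset: "A \<subseteq> B \<Longrightarrow> nowhere_dense B \<Longrightarrow> nowhere_dense A"
  unfolding nowhere_dense_def by (metis closure_mono interior_mono subset_empty)

lemma Cinf_by_sub:
  assumes "continuous_on UNIV g" "h \<in> Cinf" "\<And>w. \<bar>g w\<bar> = \<infinity> \<Longrightarrow> \<bar>h w\<bar> = \<infinity>"
  shows "g \<in> Cinf"
proof -
  have "{w. \<bar>g w\<bar> = \<infinity>} \<subseteq> {w. \<bar>h w\<bar> = \<infinity>}" using assms(3) by auto
  then show ?thesis using assms(1,2) nowhere_dense_subset unfolding Cinf_def by blast
qed

lemma csmul_cont: "continuous_on UNIV g \<Longrightarrow> continuous_on UNIV (csmul c g)"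
  unfolding csmul_def continuous_on_def by (auto intro!: tendsto_cmult_ereal)

lemma csmul_Cinf: assumes "g \<in> Cinf" shows "csmul c g \<in> Cinf"
proof (rule Cinf_by_sub[OF csmul_cont[OF Cinf_cont[OF assms]] assms])
  fix w assume "\<bar>csmul c g w\<bar> = \<infinity>"
  then show "\<bar>g w\<bar> = \<infinity>" unfolding csmul_def by (cases "g w") auto
qed

lemma cone_eq: "cone = (\<lambda>w. ereal 1)" unfolding cone_def by (simp add: one_ereal_def)
lemma czero_eq: "czero = (\<lambda>w. ereal 0)" unfolding czero_def by (simp add: zero_ereal_def)

locale setting =
  fixes V :: "('k::t2_space \<Rightarrow> ereal) set" and X :: "'k \<Rightarrow> ereal"
  assumes K_compact: "compact (UNIV :: 'k set)"
    and ed: "\<forall>U::'k set. open U \<longrightarrow> open (closure U)"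
    and V_ideal: "ideal_in Cinf V"
    and E_in: "cone \<in> V" and X_in: "X \<in> V"
begin

lemma V_sub: "g \<in> V \<Longrightarrow> g \<in> Cinf" using V_ideal unfolding ideal_in_def by blast
lemma V_zero: "czero \<in> V" using V_ideal unfolding ideal_in_def by blast
lemma V_add: "g \<in> V \<Longrightarrow> h \<in> V \<Longrightarrow> cadd g h \<in> V" using V_ideal unfolding ideal_in_def by blast
lemma V_smul: "g \<in> V \<Longrightarrow> csmul c g \<in> V" using V_ideal unfolding ideal_in_def by blast
lemma V_solid: "g \<in> Cinf \<Longrightarrow> h \<in> V \<Longrightarrow> (\<And>w. \<bar>g w\<bar> \<le> \<bar>h w\<bar>) \<Longrightarrow> g \<in> V"
  using V_ideal unfolding ideal_in_def cabs_def le_fun_def by blast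
lemma V_cont: "g \<in> V \<Longrightarrow> continuous_on UNIV g" using V_sub Cinf_cont by blast

lemma X_cont: "continuous_on UNIV X" using V_cont X_in by blast

definition C :: "real \<Rightarrow> 'k set" where "C t = closure {w. ereal t < X w}"

lemma C_open: "open (C t)"
proof -
  have "open {w. (\<lambda>_. ereal t) w < X w}" by (rule open_Collect_less[OF continuous_on_const X_cont])
  then show ?thesis unfolding C_def by (rule ed[rule_format])
qed

lemma C_closed: "closed (C t)" unfolding C_def by simp

lemma C_mono: assumes "s \<le> t" shows "C t \<subseteq> C s"
proof -
  have "{w. ereal t < X w} \<subseteq> {w. ereal s < X w}"
  proof
    fix w assume "w \<in> {w. ereal t < X w}"
    then have a: "ereal t < X w" by simp
    have b: "ereal s \<le> ereal t" using assms by simp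
    have "ereal s < X w" by (rule order.strict_trans1[OF b a])
    then show "w \<in> {w. ereal s < X w}" by simp
  qed
  then show ?thesis unfolding C_def by (rule closure_mono)
qed

lemma C_upper: assumes "ereal t < X w" shows "w \<in> C t"
proof -
  have "w \<in> {w. ereal t < X w}" using assms by simp
  then show ?thesis unfolding C_def using closure_subset[of "{w. ereal t < X w}"] by (rule subsetD[rotated])
qed

lemma C_lower: "w \<in> C t \<Longrightarrow> ereal t \<le> X w"
proof -
  have "closed {w. (\<lambda>_. ereal t) w \<le> X w}" by (rule closed_Collect_le[OF continuous_on_const X_cont])
  moreover have "{w. ereal t < X w} \<subseteq> {w. (\<lambda>_. ereal t) w \<le> X w}" by auto
  ultimately have "C t \<subseteq> {w. ereal t \<le> X w}" unfolding C_def by (simp add: closure_minimal)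
  then show "w \<in> C t \<Longrightarrow> ereal t \<le> X w" by auto
qed

lemma C_out: "X w < ereal t \<Longrightarrow> w \<notin> C t"
proof
  assume "X w < ereal t" "w \<in> C t"
  have "open {w. X w < (\<lambda>_. ereal t) w}" by (rule open_Collect_less[OF X_cont continuous_on_const])
  moreover have "{w. X w < ereal t} \<inter> {w. ereal t < X w} = {}" by auto
  ultimately have "{w. X w < ereal t} \<inter> C t = {}" unfolding C_def by (simp add: open_Int_closure_eq_empty)
  then show False using \<open>X w < ereal t\<close> \<open>w \<in> C t\<close> by auto
qed

lemma ind_C_cont: "continuous_on UNIV (ind (C t))" by (rule ind_cont[OF C_open C_closed])
lemma ind_nC_cont: "continuous_on UNIV (ind (- C t))" by (rule ind_cont) (auto simp: C_open C_closed)

lemma ind_V: "continuous_on UNIV (ind S) \<Longrightarrow> (\<lambda>w. ereal (ind S w)) \<in> V"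
  by (rule V_solid[OF real_Cinf E_in]) (auto simp: ind_def cone_def)

end


context setting begin

definition BC :: "'k set \<Rightarrow> ('k \<Rightarrow> ereal) set" where
  "BC S = {g \<in> V. \<forall>w. w \<notin> S \<longrightarrow> g w = 0}"

lemma exists_finite:
  assumes "u \<in> Cinf" obtains w where "\<bar>u w\<bar> \<noteq> \<infinity>"
proof -
  have "{w. \<bar>u w\<bar> \<noteq> \<infinity>} \<noteq> {}"
  proof
    assume "{w. \<bar>u w\<bar> \<noteq> \<infinity>} = {}"
    then show False using Cinf_dense[OF assms] by simp
  qed
  then have "\<exists>w. \<bar>u w\<bar> \<noteq> \<infinity>" by (metis (mono_tags) Collect_empty_eq)
  then obtain w where "\<bar>u w\<bar> \<noteq> \<infinity>" by (elim exE)
  then show ?thesis by (rule that)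
qed

lemma lub_empty_False: "\<not> is_lub_in V {} u"
proof
  assume "is_lub_in V {} u"
  then have uV: "u \<in> V" and le: "\<forall>v\<in>V. u \<le> v" unfolding is_lub_in_def by auto
  have m1: "u \<le> csmul (-1) cone" using le V_smul[OF E_in] by blast
  have m2: "u \<le> csmul 2 u" using le V_smul[OF uV] by blast
  obtain w where w: "\<bar>u w\<bar> \<noteq> \<infinity>" using exists_finite[OF V_sub[OF uV]] by blast
  have a: "u w \<le> csmul (-1) cone w" using m1 by (simp add: le_fun_def)
  have b: "u w \<le> csmul 2 u w" using m2 by (simp add: le_fun_def)
  show False using w a b by (cases "u w") (auto simp: csmul_def cone_def)
qed

lemma BC_sub: "BC S \<subseteq> V" unfolding BC_def by auto

lemma BC_ideal: "ideal_in V (BC S)"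
  unfolding ideal_in_def
proof (intro conjI ballI allI impI)
  show "BC S \<subseteq> V" by (rule BC_sub)
  show "czero \<in> BC S" unfolding BC_def using V_zero by (simp add: czero_def)
next
  fix g h assume g: "g \<in> BC S" and h: "h \<in> BC S"
  have gV: "g \<in> V" and hV: "h \<in> V" using g h unfolding BC_def by auto
  show "cadd g h \<in> BC S" unfolding BC_def
  proof (intro CollectI conjI allI impI)
    show "cadd g h \<in> V" by (rule V_add[OF gV hV])
    fix w assume "w \<notin> S"
    then have "g w = 0" "h w = 0" using g h unfolding BC_def by auto
    then show "cadd g h w = 0" using cadd_general(2)[OF ed V_sub[OF gV] V_sub[OF hV], of w] by simp
  qed
next
  fix c g assume g: "g \<in> BC S"
  then show "csmul c g \<in> BC S" unfolding BC_def csmul_def using V_smul[of g c] by (auto simp: csmul_def)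
next
  fix g h assume g: "g \<in> V" and h: "h \<in> BC S" and le: "cabs g \<le> cabs h"
  show "g \<in> BC S" unfolding BC_def
  proof (intro CollectI conjI allI impI)
    show "g \<in> V" by (rule g)
    fix w assume "w \<notin> S"
    then have "h w = 0" using h unfolding BC_def by auto
    moreover have "\<bar>g w\<bar> \<le> \<bar>h w\<bar>" using le unfolding cabs_def le_fun_def by simp
    ultimately show "g w = 0" by (cases "g w") auto
  qed
qed

lemma BC_band:
  assumes oS: "open S" and cS: "closed S"
  shows "band_in V (BC S)"
  unfolding band_in_def
proof (intro conjI allI impI)
  show "ideal_in V (BC S)" by (rule BC_ideal)
  fix A u assume A: "A \<subseteq> BC S" and lub: "is_lub_in V A u"
  have "A \<noteq> {}" using lub lub_empty_False by blast
  then obtain s0 where s0: "s0 \<in> A" by blast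
  have uV: "u \<in> V" and ub: "\<forall>s\<in>A. s \<le> u" and least: "\<forall>v\<in>V. (\<forall>s\<in>A. s \<le> v) \<longrightarrow> u \<le> v"
    using lub unfolding is_lub_in_def by auto
  define u' where "u' = (\<lambda>w. if w \<in> S then u w else (\<lambda>_. 0) w)"
  have cu: "continuous_on UNIV u" by (rule V_cont[OF uV])
  have "continuous_on (S \<union> - S) u'" unfolding u'_def
    by (rule continuous_on_If) (use oS cS continuous_on_subset[OF cu] in \<open>auto intro: continuous_on_const\<close>)
  moreover have "S \<union> - S = UNIV" by auto
  ultimately have cu': "continuous_on UNIV u'" by simp
  have u'C: "u' \<in> Cinf"
    by (rule Cinf_by_sub[OF cu' V_sub[OF uV]]) (auto simp: u'_def split: if_splits)
  have u'V: "u' \<in> V"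
    by (rule V_solid[OF u'C uV]) (simp add: u'_def)
  have "\<forall>s\<in>A. s \<le> u'"
  proof
    fix s assume sA: "s \<in> A"
    show "s \<le> u'" unfolding le_fun_def
    proof
      fix w show "s w \<le> u' w"
      proof (cases "w \<in> S")
        case True then show ?thesis using ub sA by (simp add: u'_def le_fun_def)
      next
        case False then have "s w = 0" using A sA unfolding BC_def by auto
        then show ?thesis using False by (simp add: u'_def)
      qed
    qed
  qed
  then have uu': "u \<le> u'" using least u'V by blast
  show "u \<in> BC S" unfolding BC_def
  proof (intro CollectI conjI allI impI)
    show "u \<in> V" by (rule uV)
    fix w assume wS: "w \<notin> S"
    have "u w \<le> u' w" using uu' by (simp add: le_fun_def)
    then have "u w \<le> 0" using wS by (simp add: u'_def)
    moreover have "s0 w \<le> u w" using ub s0 by (simp add: le_fun_def)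
    moreover have "s0 w = 0" using A s0 wS unfolding BC_def by auto
    ultimately show "u w = 0" by simp
  qed
qed

lemma band_gen_sub: "band_in V B \<Longrightarrow> Y \<in> B \<Longrightarrow> band_gen V Y \<subseteq> B"
  unfolding band_gen_def by (rule Inter_lower) simp

end


context setting begin

definition Yt :: "real \<Rightarrow> 'k \<Rightarrow> ereal" where
  "Yt t = (\<lambda>w. max (X w - ereal t) 0)"

lemma Y_cont: "continuous_on UNIV (Yt t)"
proof -
  have "continuous_on UNIV (\<lambda>w. X w - ereal t)" unfolding continuous_on_def
  proof
    fix x
    have "(X \<longlongrightarrow> X x) (at x within UNIV)" using X_cont unfolding continuous_on_def by blast
    then show "((\<lambda>w. X w - ereal t) \<longlongrightarrow> X x - ereal t) (at x within UNIV)"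
      by (intro tendsto_diff_ereal_general tendsto_const) auto
  qed
  then show ?thesis unfolding Yt_def by (intro continuous_on_max continuous_on_const)
qed

lemma Y_pos: "0 < Yt t w \<longleftrightarrow> ereal t < X w"
  unfolding Yt_def by (cases "X w") (auto simp: max_def)

lemma Y_nonneg: "0 \<le> Yt t w" unfolding Yt_def by simp

lemma Y_zero: "\<not> ereal t < X w \<Longrightarrow> Yt t w = 0"
  using Y_pos[of t w] Y_nonneg[of t w] by simp

lemma cabs_V: "g \<in> V \<Longrightarrow> (\<lambda>w. \<bar>g w\<bar>) \<in> V"
proof -
  assume gV: "g \<in> V"
  have c: "continuous_on UNIV (\<lambda>w. \<bar>g w\<bar>)" using V_cont[OF gV] by (intro continuous_intros)
  have "(\<lambda>w. \<bar>g w\<bar>) \<in> Cinf" by (rule Cinf_by_sub[OF c V_sub[OF gV]]) simp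
  then show ?thesis by (rule V_solid[OF _ gV]) simp
qed

lemma Y_V: "Yt t \<in> V"
proof -
  have YC: "Yt t \<in> Cinf"
  proof (rule Cinf_by_sub[OF Y_cont V_sub[OF X_in]])
    fix w assume "\<bar>Yt t w\<bar> = \<infinity>" then show "\<bar>X w\<bar> = \<infinity>" unfolding Yt_def by (cases "X w") (auto simp: max_def split: if_splits)
  qed
  define H where "H = cadd (\<lambda>w. \<bar>X w\<bar>) (csmul \<bar>t\<bar> cone)"
  have aV: "(\<lambda>w. \<bar>X w\<bar>) \<in> V" by (rule cabs_V[OF X_in])
  have HV: "H \<in> V" unfolding H_def by (rule V_add[OF aV V_smul[OF E_in]])
  have Hval: "H w = \<bar>X w\<bar> + ereal \<bar>t\<bar>" if "\<bar>X w\<bar> \<noteq> \<infinity>" for w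
  proof -
    have "H w = \<bar>X w\<bar> + csmul \<bar>t\<bar> cone w"
      unfolding H_def using that by (intro cadd_general(2)[OF ed V_sub[OF aV] csmul_Cinf[OF V_sub[OF E_in]]]) (auto simp: csmul_def cone_def)
    then show ?thesis by (simp add: csmul_def cone_def)
  qed
  have "\<forall>w. \<bar>Yt t w\<bar> \<le> \<bar>H w\<bar>"
  proof (rule dense_le[OF _ _ Cinf_dense[OF V_sub[OF X_in]]])
    show "continuous_on UNIV (\<lambda>w. \<bar>Yt t w\<bar>)" using Y_cont by (intro continuous_intros)
    show "continuous_on UNIV (\<lambda>w. \<bar>H w\<bar>)" using V_cont[OF HV] by (intro continuous_intros)
    show "\<forall>x\<in>{w. \<bar>X w\<bar> \<noteq> \<infinity>}. \<bar>Yt t x\<bar> \<le> \<bar>H x\<bar>"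
    proof
      fix x assume "x \<in> {w. \<bar>X w\<bar> \<noteq> \<infinity>}"
      then have fx: "\<bar>X x\<bar> \<noteq> \<infinity>" by simp
      then obtain r where r: "X x = ereal r" by (cases "X x") auto
      show "\<bar>Yt t x\<bar> \<le> \<bar>H x\<bar>" using Hval[OF fx] r unfolding Yt_def by auto
    qed
  qed
  then show ?thesis by (intro V_solid[OF YC HV]) auto
qed

lemma Y_BC: "Yt t \<in> BC (C t)"
  unfolding BC_def using Y_V Y_zero C_upper by blast

definition Pt :: "real \<Rightarrow> 'k \<Rightarrow> ereal" where "Pt t = (\<lambda>w. ereal (ind (C t) w))"
definition Wt :: "real \<Rightarrow> 'k \<Rightarrow> ereal" where "Wt t = (\<lambda>w. ereal (ind (- C t) w))"

lemma P_V: "Pt t \<in> V" unfolding Pt_def by (rule ind_V[OF ind_C_cont])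
lemma W_V: "Wt t \<in> V" unfolding Wt_def by (rule ind_V[OF ind_nC_cont])

end


context setting begin

lemma P_gen: "Pt t \<in> band_gen V (Yt t)"
  unfolding band_gen_def
proof (rule InterI, clarify)
  fix B assume bB: "band_in V B" and YB: "Yt t \<in> B"
  have BV: "B \<subseteq> V" and Bsmul: "\<forall>c. \<forall>g\<in>B. csmul c g \<in> B"
    and Bsolid: "\<forall>g\<in>V. \<forall>h\<in>B. cabs g \<le> cabs h \<longrightarrow> g \<in> B"
    and Bsup: "\<forall>S u. S \<subseteq> B \<longrightarrow> is_lub_in V S u \<longrightarrow> u \<in> B"
    using bB unfolding band_in_def ideal_in_def by auto
  define s where "s n = cinf (csmul (real n) (Yt t)) cone" for n :: nat
  have sval: "s n w = min (ereal (real n) * Yt t w) 1" for n w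
    unfolding s_def cinf_def csmul_def cone_def by simp
  have s01: "0 \<le> s n w" "s n w \<le> 1" for n w
    using Y_nonneg[of t w] by (auto simp: sval)
  have sB: "s n \<in> B" for n
  proof -
    have c: "continuous_on UNIV (s n)" unfolding s_def cinf_def cone_def
      by (intro continuous_on_min csmul_cont Y_cont continuous_on_const)
    have sC: "s n \<in> Cinf"
    proof (rule Cinf_by_sub[OF c V_sub[OF E_in]])
      fix w assume "\<bar>s n w\<bar> = \<infinity>" then show "\<bar>cone w\<bar> = \<infinity>" using s01[of n w] by auto
    qed
    have sV: "s n \<in> V" by (rule V_solid[OF sC E_in]) (use s01 in \<open>auto simp: cone_def\<close>)
    have mB: "csmul (real n) (Yt t) \<in> B" using Bsmul YB by blast
    have "cabs (s n) \<le> cabs (csmul (real n) (Yt t))"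
      unfolding cabs_def le_fun_def
    proof
      fix w
      have "0 \<le> ereal (real n) * Yt t w" using Y_nonneg[of t w] by simp
      moreover have "s n w \<le> ereal (real n) * Yt t w" by (simp add: sval)
      ultimately show "\<bar>s n w\<bar> \<le> \<bar>csmul (real n) (Yt t) w\<bar>" using s01[of n w] by (simp add: csmul_def)
    qed
    then show ?thesis using Bsolid sV mB by blast
  qed
  have lub: "is_lub_in V (range s) (Pt t)"
    unfolding is_lub_in_def
  proof (intro conjI ballI impI)
    show "Pt t \<in> V" by (rule P_V)
  next
    fix x assume "x \<in> range s"
    then obtain n where xn: "x = s n" by blast
    show "x \<le> Pt t" unfolding xn le_fun_def
    proof
      fix w show "s n w \<le> Pt t w"
      proof (cases "w \<in> C t")
        case True then show ?thesis using s01[of n w] by (simp add: Pt_def ind_def one_ereal_def)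
      next
        case False
        then have "Yt t w = 0" using Y_zero C_upper by blast
        then show ?thesis using False by (simp add: Pt_def ind_def sval)
      qed
    qed
  next
    fix v assume vV: "v \<in> V" and ub: "\<forall>x\<in>range s. x \<le> v"
    have ubn: "s n w \<le> v w" for n w using ub by (auto simp: le_fun_def)
    have "{w. ereal t < X w} \<subseteq> {w. (\<lambda>_. 1) w \<le> v w}"
    proof
      fix w assume "w \<in> {w. ereal t < X w}"
      then have pos: "0 < Yt t w" using Y_pos by simp
      obtain n :: nat where n: "1 \<le> ereal (real n) * Yt t w"
      proof (cases "Yt t w")
        case (real y)
        then have "0 < y" using pos by simp
        obtain n :: nat where "1 / y < real n" using reals_Archimedean2 by blast
        then have "1 < real n * y" using \<open>0 < y\<close> by (simp add: field_simps)
        then show ?thesis using real by (intro that[of n]) simp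
      next
        case PInf then show ?thesis by (intro that[of 1]) simp
      next
        case MInf then show ?thesis using pos by simp
      qed
      then have "s n w = 1" by (simp add: sval)
      then show "w \<in> {w. (\<lambda>_. 1) w \<le> v w}" using ubn[of n w] by simp
    qed
    moreover have "closed {w. (\<lambda>_. 1) w \<le> v w}" by (rule closed_Collect_le[OF continuous_on_const V_cont[OF vV]])
    ultimately have Cv: "C t \<subseteq> {w. (\<lambda>_. 1) w \<le> v w}" unfolding C_def by (rule closure_minimal)
    show "Pt t \<le> v" unfolding le_fun_def
    proof
      fix w show "Pt t w \<le> v w"
      proof (cases "w \<in> C t")
        case True then have "1 \<le> v w" using Cv by auto
        then show ?thesis using True by (simp add: Pt_def ind_def one_ereal_def)
      next
        case False
        have "s 0 w = 0" by (simp add: sval zero_ereal_def[symmetric])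
        then show ?thesis using ubn[of 0 w] False by (simp add: Pt_def ind_def zero_ereal_def)
      qed
    qed
  qed
  show "Pt t \<in> B" using Bsup lub sB by blast
qed

lemma gen_BC: "h \<in> band_gen V (Yt t) \<Longrightarrow> h \<in> BC (C t)"
  using band_gen_sub[OF BC_band[OF C_open C_closed] Y_BC] by blast

lemma W_disj: "Wt t \<in> disj_compl V (band_gen V (Yt t))"
  unfolding disj_compl_def
proof (intro CollectI conjI ballI)
  show "Wt t \<in> V" by (rule W_V)
  fix h assume "h \<in> band_gen V (Yt t)"
  then have h: "h \<in> BC (C t)" by (rule gen_BC)
  show "cinf (cabs (Wt t)) (cabs h) = czero"
  proof
    fix w show "cinf (cabs (Wt t)) (cabs h) w = czero w"
    proof (cases "w \<in> C t")
      case True then show ?thesis by (simp add: cinf_def cabs_def Wt_def ind_def czero_def zero_ereal_def[symmetric] min_def)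
    next
      case False then have "h w = 0" using h unfolding BC_def by auto
      then show ?thesis by (simp add: cinf_def cabs_def czero_def)
    qed
  qed
qed

lemma cone_split: "cone = cadd (Pt t) (Wt t)"
proof -
  have "cadd (Pt t) (Wt t) = (\<lambda>w. ereal (ind (C t) w + ind (- C t) w))"
    unfolding Pt_def Wt_def by (rule cadd_fin[OF ind_C_cont ind_nC_cont])
  also have "\<dots> = cone" by (auto simp: ind_def cone_def)
  finally show ?thesis by simp
qed

lemma band_proj_eq: "band_proj V (Yt t) cone = Pt t"
  unfolding band_proj_def
proof (rule the_equality)
  show "Pt t \<in> band_gen V (Yt t) \<and> (\<exists>W\<in>disj_compl V (band_gen V (Yt t)). cone = cadd (Pt t) W)"
    using P_gen W_disj cone_split by blast
next
  fix P' assume "P' \<in> band_gen V (Yt t) \<and> (\<exists>W\<in>disj_compl V (band_gen V (Yt t)). cone = cadd P' W)"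
  then obtain W' where P'g: "P' \<in> band_gen V (Yt t)" and W'd: "W' \<in> disj_compl V (band_gen V (Yt t))"
    and split: "cone = cadd P' W'" by blast
  have P'B: "P' \<in> BC (C t)" by (rule gen_BC[OF P'g])
  have P'V: "P' \<in> V" using P'B unfolding BC_def by auto
  have W'V: "W' \<in> V" and W'0: "cinf (cabs W') (cabs (Pt t)) = czero"
    using W'd P_gen unfolding disj_compl_def by auto
  show "P' = Pt t"
  proof (rule dense_eq[OF V_cont[OF P'V] V_cont[OF P_V] Cinf_dense2(1)[OF V_sub[OF P'V] V_sub[OF W'V]]], intro ballI)
    fix w assume "w \<in> {w. \<bar>P' w\<bar> \<noteq> \<infinity> \<and> \<bar>W' w\<bar> \<noteq> \<infinity>}"
    then have f: "\<bar>P' w\<bar> \<noteq> \<infinity>" "\<bar>W' w\<bar> \<noteq> \<infinity>" by auto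
    have sum: "P' w + W' w = 1"
      using cadd_general(2)[OF ed V_sub[OF P'V] V_sub[OF W'V] f] split by (simp add: cone_def fun_eq_iff)
    show "P' w = Pt t w"
    proof (cases "w \<in> C t")
      case True
      have "min \<bar>W' w\<bar> \<bar>Pt t w\<bar> = 0" using W'0 unfolding cinf_def cabs_def czero_def by (metis)
      then have "\<bar>W' w\<bar> = 0" using True by (simp add: Pt_def ind_def min_def split: if_splits)
      then have "W' w = 0" by (cases "W' w") auto
      then show ?thesis using sum True by (simp add: Pt_def ind_def)
    next
      case False
      then have "P' w = 0" using P'B unfolding BC_def by auto
      then show ?thesis using False by (simp add: Pt_def ind_def)
    qed
  qed
qed

lemma specA_eq: "specA V X t = Wt t"
proof -
  have "specA V X t = csub cone (Pt t)"
    using band_proj_eq[of t] unfolding specA_def Yt_def by simp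
  also have "\<dots> = cadd (\<lambda>w. ereal 1) (\<lambda>w. ereal (- ind (C t) w))"
    unfolding csub_def cone_eq Pt_def by simp
  also have "\<dots> = (\<lambda>w. ereal (1 + - ind (C t) w))"
    by (rule cadd_fin) (use ind_C_cont in \<open>auto intro: continuous_intros\<close>)
  also have "\<dots> = Wt t" unfolding Wt_def by (auto simp: ind_def)
  finally show ?thesis .
qed

end


lemma lub_unique: "is_lub_in V S u \<Longrightarrow> is_lub_in V S u' \<Longrightarrow> u = u'"
  unfolding is_lub_in_def by (meson antisym)

lemma glb_unique: "is_glb_in V S u \<Longrightarrow> is_glb_in V S u' \<Longrightarrow> u = u'"
  unfolding is_glb_in_def by (meson antisym)

context setting begin

lemma specA_fun: "specA V X = Wt" using specA_eq by (simp add: fun_eq_iff)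

lemma top_lub: "is_lub_in V (range Wt) cone"
  unfolding is_lub_in_def
proof (intro conjI ballI impI)
  show "cone \<in> V" by (rule E_in)
next
  fix x assume "x \<in> range Wt" then obtain t where "x = Wt t" by blast
  then show "x \<le> cone" by (simp add: le_fun_def Wt_def ind_def cone_def)
next
  fix v assume vV: "v \<in> V" and ub: "\<forall>x\<in>range Wt. x \<le> v"
  have "\<forall>w. cone w \<le> v w"
  proof (rule dense_le[OF _ V_cont[OF vV] Cinf_dense[OF V_sub[OF X_in]]])
    show "continuous_on UNIV cone" unfolding cone_def by (rule continuous_on_const)
    show "\<forall>x\<in>{w. \<bar>X w\<bar> \<noteq> \<infinity>}. cone x \<le> v x"
    proof
      fix x assume "x \<in> {w. \<bar>X w\<bar> \<noteq> \<infinity>}"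
      then obtain r where r: "X x = ereal r" by (cases "X x") auto
      have "x \<notin> C (r + 1)" by (rule C_out) (simp add: r)
      then have "Wt (r+1) x = 1" by (simp add: Wt_def ind_def one_ereal_def)
      moreover have "Wt (r+1) x \<le> v x" using ub by (auto simp: le_fun_def)
      ultimately show "cone x \<le> v x" by (simp add: cone_def)
    qed
  qed
  then show "cone \<le> v" by (simp add: le_fun_def)
qed

lemma bot_glb: "is_glb_in V (range Wt) czero"
  unfolding is_glb_in_def
proof (intro conjI ballI impI)
  show "czero \<in> V" by (rule V_zero)
next
  fix x assume "x \<in> range Wt" then obtain t where "x = Wt t" by blast
  then show "czero \<le> x" by (simp add: le_fun_def Wt_def ind_def czero_def)
next
  fix v assume vV: "v \<in> V" and lb: "\<forall>x\<in>range Wt. v \<le> x"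
  have "\<forall>w. v w \<le> czero w"
  proof (rule dense_le[OF V_cont[OF vV] _ Cinf_dense[OF V_sub[OF X_in]]])
    show "continuous_on UNIV czero" unfolding czero_def by (rule continuous_on_const)
    show "\<forall>x\<in>{w. \<bar>X w\<bar> \<noteq> \<infinity>}. v x \<le> czero x"
    proof
      fix x assume "x \<in> {w. \<bar>X w\<bar> \<noteq> \<infinity>}"
      then obtain r where r: "X x = ereal r" by (cases "X x") auto
      have "x \<in> C (r - 1)" by (rule C_upper) (simp add: r)
      then have "Wt (r - 1) x = 0" by (simp add: Wt_def ind_def zero_ereal_def)
      moreover have "v x \<le> Wt (r - 1) x" using lb by (auto simp: le_fun_def)
      ultimately show "v x \<le> czero x" by (simp add: czero_def)
    qed
  qed
  then show "v \<le> czero" by (simp add: le_fun_def)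
qed

lemma specA_top_eq: "specA_top V X = cone"
  unfolding specA_top_def specA_fun
proof (rule the_equality)
  show "is_lub_in V (range Wt) cone" by (rule top_lub)
  fix u assume "is_lub_in V (range Wt) u" then show "u = cone" by (rule lub_unique[OF _ top_lub])
qed

lemma specA_bot_eq: "specA_bot V X = czero"
  unfolding specA_bot_def specA_fun
proof (rule the_equality)
  show "is_glb_in V (range Wt) czero" by (rule bot_glb)
  fix u assume "is_glb_in V (range Wt) u" then show "u = czero" by (rule glb_unique[OF _ bot_glb])
qed

fun mu_pt :: "ivl \<Rightarrow> 'k \<Rightarrow> real" where
  "mu_pt (OC a b) w = ind (- C b) w - ind (- C a) w"
| "mu_pt (Ray a) w = 1 - ind (- C a) w"
| "mu_pt (Low b) w = ind (- C b) w"

lemma mu_pt_cont: "continuous_on UNIV (mu_pt J)"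
proof (cases J)
  case (OC a b)
  have "continuous_on UNIV (\<lambda>w. ind (- C b) w - ind (- C a) w)"
    using ind_nC_cont by (intro continuous_intros) auto
  then show ?thesis using OC by (simp add: fun_eq_iff)
next
  case (Ray a)
  have "continuous_on UNIV (\<lambda>w. 1 - ind (- C a) w)"
    using ind_nC_cont by (intro continuous_intros) auto
  then show ?thesis using Ray by (simp add: fun_eq_iff)
next
  case (Low b)
  have "continuous_on UNIV (\<lambda>w. ind (- C b) w)" using ind_nC_cont by simp
  then show ?thesis using Low by (simp add: fun_eq_iff)
qed

lemma muA_eq: "muA V X J = (\<lambda>w. ereal (mu_pt J w))"
proof (cases J)
  case (OC a b)
  have "muA V X J = cadd (\<lambda>w. ereal (ind (- C b) w)) (\<lambda>w. ereal (- ind (- C a) w))"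
    using OC by (simp add: csub_def specA_fun Wt_def)
  also have "\<dots> = (\<lambda>w. ereal (ind (- C b) w + - ind (- C a) w))"
    by (rule cadd_fin) (use ind_nC_cont in \<open>auto intro: continuous_intros\<close>)
  finally show ?thesis using OC by simp
next
  case (Ray a)
  have "muA V X J = cadd (\<lambda>w. ereal 1) (\<lambda>w. ereal (- ind (- C a) w))"
    using Ray by (simp add: csub_def specA_fun Wt_def specA_top_eq cone_eq)
  also have "\<dots> = (\<lambda>w. ereal (1 + - ind (- C a) w))"
    by (rule cadd_fin) (use ind_nC_cont in \<open>auto intro: continuous_intros\<close>)
  finally show ?thesis using Ray by simp
next
  case (Low b)
  have "muA V X J = cadd (\<lambda>w. ereal (ind (- C b) w)) (\<lambda>w. ereal (- 0))"
    using Low by (simp add: csub_def specA_fun Wt_def specA_bot_eq czero_eq)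
  also have "\<dots> = (\<lambda>w. ereal (ind (- C b) w + - 0))"
    by (rule cadd_fin) (use ind_nC_cont in \<open>auto intro: continuous_intros\<close>)
  finally show ?thesis using Low by simp
qed

definition rv :: "(real \<times> ivl) list \<Rightarrow> 'k \<Rightarrow> real" where
  "rv R w = sum_list (map (\<lambda>p. fst p * mu_pt (snd p) w) R)"

lemma rep_val_eq: "rep_val V X R = (\<lambda>w. ereal (rv R w)) \<and> continuous_on UNIV (rv R)"
proof (induction R)
  case Nil
  show ?case by (simp add: rep_val_def rv_def czero_eq continuous_on_const)
next
  case (Cons p R)
  obtain c J where p: "p = (c, J)" by (cases p)
  have cR: "continuous_on UNIV (rv R)" and eR: "rep_val V X R = (\<lambda>w. ereal (rv R w))" using Cons by auto
  have c1: "continuous_on UNIV (\<lambda>w. c * mu_pt J w)" using mu_pt_cont by (intro continuous_intros) auto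
  have "rep_val V X (p # R) = cadd (csmul c (muA V X J)) (rep_val V X R)"
    by (simp add: rep_val_def p)
  also have "\<dots> = cadd (\<lambda>w. ereal (c * mu_pt J w)) (\<lambda>w. ereal (rv R w))"
    by (simp add: eR muA_eq csmul_def del: mu_pt.simps)
  also have "\<dots> = (\<lambda>w. ereal (c * mu_pt J w + rv R w))" by (rule cadd_fin[OF c1 cR])
  also have "\<dots> = (\<lambda>w. ereal (rv (p # R) w))" by (simp add: rv_def p del: mu_pt.simps)
  finally have e: "rep_val V X (p # R) = (\<lambda>w. ereal (rv (p # R) w))" .
  have "continuous_on UNIV (\<lambda>w. c * mu_pt J w + rv R w)" by (rule continuous_on_add[OF c1 cR])
  moreover have "(\<lambda>w. c * mu_pt J w + rv R w) = rv (p # R)" by (simp add: rv_def p fun_eq_iff del: mu_pt.simps)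
  ultimately have "continuous_on UNIV (rv (p # R))" by metis
  then show ?case using e by blast
qed

end


fun endpts :: "ivl \<Rightarrow> real set" where
  "endpts (OC a b) = {a, b}"
| "endpts (Ray a) = {a}"
| "endpts (Low b) = {b}"

lemma finite_endpts: "finite (endpts J)" by (cases J) auto

lemma exists_s:
  fixes P :: "real set"
  assumes fin: "finite P" and mono: "\<And>a b. a \<le> b \<Longrightarrow> Q b \<Longrightarrow> Q a"
  shows "\<exists>s. \<forall>a\<in>P. Q a \<longleftrightarrow> a < s"
proof (cases "{a\<in>P. \<not> Q a} = {}")
  case True
  define s where "s = Max (insert 0 P) + 1"
  have "\<forall>a\<in>P. Q a \<longleftrightarrow> a < s"
  proof
    fix a assume a: "a \<in> P"
    have "a \<le> Max (insert 0 P)" using fin a by simp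
    then have "a < s" unfolding s_def by simp
    moreover have "Q a" using True a by blast
    ultimately show "Q a \<longleftrightarrow> a < s" by simp
  qed
  then show ?thesis by blast
next
  case False
  define U where "U = {a\<in>P. \<not> Q a}"
  have finU: "finite U" using fin unfolding U_def by simp
  have neU: "U \<noteq> {}" using False unfolding U_def by simp
  define s where "s = Min U"
  have sU: "s \<in> U" unfolding s_def using finU neU by simp
  have "\<forall>a\<in>P. Q a \<longleftrightarrow> a < s"
  proof
    fix a assume a: "a \<in> P"
    show "Q a \<longleftrightarrow> a < s"
    proof
      assume Qa: "Q a"
      show "a < s"
      proof (rule ccontr)
        assume "\<not> a < s" then have "s \<le> a" by simp
        then have "Q s" using mono Qa by blast
        then show False using sU unfolding U_def by simp
      qed
    next
      assume as: "a < s"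
      show "Q a"
      proof (rule ccontr)
        assume "\<not> Q a" then have "a \<in> U" using a unfolding U_def by simp
        then have "s \<le> a" unfolding s_def using finU by simp
        then show False using as by simp
      qed
    qed
  qed
  then show ?thesis by blast
qed

context setting begin

lemma mu_pt_s:
  assumes ok: "ivl_ok J" and h: "\<forall>a\<in>endpts J. (w \<in> C a \<longleftrightarrow> a < s)"
  shows "mu_pt J w = (if s \<in> ivl_set J then 1 else 0)"
proof -
  have i: "ind (- C a) w = (if s \<le> a then 1 else 0)" if "a \<in> endpts J" for a
    using h that by (auto simp: ind_def)
  show ?thesis
  proof (cases J)
    case (OC a b)
    then show ?thesis using i[of a] i[of b] ok by auto
  next
    case (Ray a)
    then show ?thesis using i[of a] by auto
  next
    case (Low b)
    then show ?thesis using i[of b] by auto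
  qed
qed

lemma rv_s:
  assumes sr: "step_rep R g" and h: "\<forall>p\<in>set R. \<forall>a\<in>endpts (snd p). (w \<in> C a \<longleftrightarrow> a < s)"
  shows "rv R w = g s"
proof -
  have ok: "\<forall>i<length R. ivl_ok (snd (R ! i))" and
    geq: "g = (\<lambda>t. \<Sum>i<length R. if t \<in> ivl_set (snd (R ! i)) then fst (R ! i) else 0)"
    using sr unfolding step_rep_def by auto
  have "rv R w = (\<Sum>i<length R. fst (R ! i) * mu_pt (snd (R ! i)) w)"
    unfolding rv_def by (simp add: sum_list_sum_nth lessThan_atLeast0)
  also have "\<dots> = (\<Sum>i<length R. if s \<in> ivl_set (snd (R ! i)) then fst (R ! i) else 0)"
  proof (rule sum.cong[OF refl])
    fix i assume "i \<in> {..<length R}"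
    then have il: "i < length R" by simp
    have "mu_pt (snd (R ! i)) w = (if s \<in> ivl_set (snd (R ! i)) then 1 else 0)"
      using mu_pt_s ok il h nth_mem[OF il] by blast
    then show "fst (R ! i) * mu_pt (snd (R ! i)) w = (if s \<in> ivl_set (snd (R ! i)) then fst (R ! i) else 0)"
      by simp
  qed
  also have "\<dots> = g s" using geq by simp
  finally show ?thesis .
qed

lemma rep_val_indep:
  assumes "step_rep R1 g" "step_rep R2 g"
  shows "rep_val V X R1 = rep_val V X R2"
proof -
  have "rv R1 w = rv R2 w" for w
  proof -
    define P where "P = (\<Union>p\<in>set R1 \<union> set R2. endpts (snd p))"
    have "finite P" unfolding P_def using finite_endpts by auto
    moreover have "\<And>a b. a \<le> b \<Longrightarrow> w \<in> C b \<Longrightarrow> w \<in> C a" using C_mono by blast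
    ultimately obtain s where s: "\<forall>a\<in>P. (w \<in> C a) \<longleftrightarrow> a < s" using exists_s[of P "\<lambda>a. w \<in> C a"] by blast
    have "rv R1 w = g s" by (rule rv_s[OF assms(1)]) (use s in \<open>auto simp: P_def\<close>)
    moreover have "rv R2 w = g s" by (rule rv_s[OF assms(2)]) (use s in \<open>auto simp: P_def\<close>)
    ultimately show ?thesis by simp
  qed
  then show ?thesis using rep_val_eq by simp
qed

lemma DI_eq: assumes "step_rep R0 g" shows "DI V X g = rep_val V X R0"
  unfolding DI_def
proof (rule the_equality)
  show "\<forall>R. step_rep R g \<longrightarrow> rep_val V X R0 = rep_val V X R"
    using rep_val_indep assms by blast
  fix v assume "\<forall>R. step_rep R g \<longrightarrow> v = rep_val V X R"
  then show "v = rep_val V X R0" using assms by blast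
qed

lemma DI_cont: "g \<in> Lspace \<Longrightarrow> continuous_on UNIV (DI V X g)"
proof -
  assume "g \<in> Lspace" then obtain R where R: "step_rep R g" unfolding Lspace_def by blast
  then show ?thesis using DI_eq[OF R] rep_val_eq[of R] by (simp add: continuous_on_ereal)
qed

lemma DI_at:
  assumes g: "g \<in> Lspace" and x: "X w = ereal x" and nw: "w \<notin> C x"
  shows "DI V X g w = ereal (g x)"
proof -
  obtain R where R: "step_rep R g" using g unfolding Lspace_def by blast
  have h: "w \<in> C a \<longleftrightarrow> a < x" for a
  proof
    assume "w \<in> C a"
    show "a < x"
    proof (rule ccontr)
      assume "\<not> a < x" then have "C a \<subseteq> C x" using C_mono by simp
      then show False using nw \<open>w \<in> C a\<close> by blast
    qed
  next
    assume "a < x" then show "w \<in> C a" by (intro C_upper) (simp add: x)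
  qed
  have "rv R w = g x" by (rule rv_s[OF R]) (use h in blast)
  then show ?thesis using DI_eq[OF R] rep_val_eq[of R] by simp
qed

end


lemma t2_compact_sep:
  fixes s :: "'a::t2_space set"
  assumes cs: "compact s" and ys: "y \<notin> s"
  shows "\<exists>U V. open U \<and> open V \<and> y \<in> U \<and> s \<subseteq> V \<and> U \<inter> V = {}"
proof -
  let ?C = "\<Union>x\<in>s. {u. open u \<and> x \<in> u \<and> eventually (\<lambda>y. y \<notin> u) (nhds y)}"
  have "s \<subseteq> \<Union>?C"
  proof
    fix x
    assume "x \<in> s"
    with ys have "x \<noteq> y" by clarsimp
    then have "\<exists>u v. open u \<and> open v \<and> x \<in> u \<and> y \<in> v \<and> u \<inter> v = {}"
      by (rule hausdorff)
    with \<open>x \<in> s\<close> show "x \<in> \<Union>?C"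
      unfolding eventually_nhds by auto
  qed
  then obtain D where "D \<subseteq> ?C" and "finite D" and "s \<subseteq> \<Union>D"
    by (rule compactE [OF cs]) auto
  from \<open>D \<subseteq> ?C\<close> have "\<forall>x\<in>D. eventually (\<lambda>y. y \<notin> x) (nhds y)"
    by auto
  with \<open>finite D\<close> have "eventually (\<lambda>y. y \<notin> \<Union>D) (nhds y)"
    by (simp add: eventually_ball_finite)
  then obtain t where t: "open t" "y \<in> t" "\<forall>z\<in>t. z \<notin> \<Union>D" unfolding eventually_nhds by blast
  have "open (\<Union>D)" using \<open>D \<subseteq> ?C\<close> by auto
  then show ?thesis using t \<open>s \<subseteq> \<Union>D\<close> by blast
qed

context setting begin

definition G :: "'k set" where "G = {w. \<exists>x. X w = ereal x \<and> w \<notin> C x}"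

lemma G_meets:
  assumes oO: "open Op" and ne: "Op \<noteq> {}"
  shows "Op \<inter> G \<noteq> {}"
proof -
  define D where "D = {w. \<bar>X w\<bar> \<noteq> \<infinity>}"
  have oD: "open D"
  proof -
    have "D = - {w. \<bar>X w\<bar> = \<infinity>}" unfolding D_def by auto
    then show ?thesis using inf_set_closed[OF X_cont] by auto
  qed
  have dD: "closure D = UNIV" unfolding D_def by (rule Cinf_dense[OF V_sub[OF X_in]])
  have "Op \<inter> D \<noteq> {}"
  proof
    assume "Op \<inter> D = {}"
    then have "Op \<inter> closure D = {}" using open_Int_closure_eq_empty[OF oO] by simp
    then show False using ne dD by simp
  qed
  then obtain w1 where w1: "w1 \<in> Op \<inter> D" by blast
  define W where "W = Op \<inter> D"
  have oW: "open W" unfolding W_def by (rule open_Int[OF oO oD])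
  have "compact (UNIV \<inter> - W)" by (rule compact_Int_closed[OF K_compact closed_Compl[OF oW]])
  then have "compact (- W)" by simp
  moreover have "w1 \<notin> - W" using w1 unfolding W_def by simp
  ultimately have "\<exists>U V. open U \<and> open V \<and> w1 \<in> U \<and> - W \<subseteq> V \<and> U \<inter> V = {}"
    by (rule t2_compact_sep)
  then obtain U V' where UV: "open U" "open V'" "w1 \<in> U" "- W \<subseteq> V'" "U \<inter> V' = {}"
    by (elim exE conjE)
  have "U \<subseteq> - V'" using UV(5) by auto
  moreover have "closed (- V')" using UV(2) by auto
  ultimately have cU: "closure U \<subseteq> - V'" by (rule closure_minimal)
  define Q where "Q = closure U"
  have "- V' \<subseteq> W" using UV(4) by blast
  then have QW: "Q \<subseteq> W" unfolding Q_def using cU by (intro order_trans[OF cU])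
  have oQ: "open Q" unfolding Q_def by (rule ed[rule_format, OF UV(1)])
  have cQ: "compact Q"
  proof -
    have "compact (UNIV \<inter> Q)" unfolding Q_def by (rule compact_Int_closed[OF K_compact]) simp
    then show ?thesis by simp
  qed
  have "w1 \<in> Q" unfolding Q_def using closure_subset[of U] UV(3) by (rule subsetD)
  then have neQ: "Q \<noteq> {}" by auto
  obtain w where wQ: "w \<in> Q" and wmax: "\<forall>y\<in>Q. X y \<le> X w"
    using continuous_attains_sup[OF cQ neQ continuous_on_subset[OF X_cont]] by blast
  have "w \<in> D" using wQ QW unfolding W_def by auto
  then obtain x where x: "X w = ereal x" unfolding D_def by (cases "X w") auto
  have "Q \<inter> {w. ereal x < X w} = {}"
  proof (rule ccontr)
    assume "Q \<inter> {w. ereal x < X w} \<noteq> {}"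
    then obtain y where "y \<in> Q" "ereal x < X y" by auto
    then show False using wmax x by (metis not_le)
  qed
  then have "Q \<inter> C x = {}" unfolding C_def using open_Int_closure_eq_empty[OF oQ] by simp
  then have "w \<in> G" unfolding G_def using x wQ by blast
  moreover have "w \<in> Op" using wQ QW unfolding W_def by auto
  ultimately show ?thesis by blast
qed

lemma G_dense: "closure G = UNIV"
proof -
  have "interior (- G) = {}"
  proof (rule ccontr)
    assume "interior (- G) \<noteq> {}"
    then have "interior (- G) \<inter> G \<noteq> {}" by (intro G_meets) auto
    then show False using interior_subset[of "- G"] by blast
  qed
  then show ?thesis by (simp add: closure_interior)
qed

end


context setting begin

lemma fcomp_props:
  fixes f :: "real \<Rightarrow> real" and M :: real
  assumes fc: "continuous_on UNIV f" and fp: "\<And>t. 0 \<le> f t" and fM: "\<And>t. f t \<le> M"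
  shows "fcomp f X \<in> V" "czero \<le> fcomp f X" "continuous_on UNIV (fcomp f X)"
    "\<And>w x. X w = ereal x \<Longrightarrow> fcomp f X w = ereal (f x)"
proof -
  define D where "D = {w. \<bar>X w\<bar> \<noteq> \<infinity>}"
  have dD: "closure D = UNIV" unfolding D_def by (rule Cinf_dense[OF V_sub[OF X_in]])
  define \<phi> where "\<phi> w = ereal (f (real_of_ereal (X w)))" for w
  have c1: "continuous_on D X" using continuous_on_subset[OF X_cont] by blast
  have "X ` D \<subseteq> UNIV - {\<infinity>, -\<infinity>}" unfolding D_def by auto
  then have c2: "continuous_on D (real_of_ereal \<circ> X)"
    by (rule continuous_on_compose[OF c1 continuous_on_subset[OF continuous_on_real]])
  have c3: "continuous_on D (f \<circ> (real_of_ereal \<circ> X))"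
    by (rule continuous_on_compose[OF c2 continuous_on_subset[OF fc]]) simp
  have "continuous_on D \<phi>" unfolding \<phi>_def using continuous_on_ereal[OF c3] by (simp add: o_def)
  then obtain F where F: "continuous_on UNIV F" "\<forall>x\<in>D. F x = \<phi> x" using ext_lemma[OF ed dD] by blast
  have lo: "\<forall>w. (\<lambda>_. 0) w \<le> F w"
    by (rule dense_le[OF continuous_on_const F(1) dD]) (use F(2) fp in \<open>simp add: \<phi>_def\<close>)
  have hi: "\<forall>w. F w \<le> (\<lambda>_. ereal M) w"
    by (rule dense_le[OF F(1) continuous_on_const dD]) (use F(2) fM in \<open>simp add: \<phi>_def\<close>)
  have M0: "0 \<le> M" using fp[of 0] fM[of 0] by simp
  have FC: "F \<in> Cinf"
  proof (rule Cinf_by_sub[OF F(1) V_sub[OF E_in]])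
    fix w assume "\<bar>F w\<bar> = \<infinity>"
    moreover have "0 \<le> F w" "F w \<le> ereal M" using lo hi by auto
    ultimately show "\<bar>cone w\<bar> = \<infinity>" by (cases "F w") auto
  qed
  have eq: "fcomp f X = F" unfolding fcomp_def
  proof (rule the_equality)
    show "F \<in> Cinf \<and> (\<forall>w. \<bar>X w\<bar> \<noteq> \<infinity> \<longrightarrow> F w = ereal (f (real_of_ereal (X w))))"
      using FC F(2) unfolding D_def \<phi>_def by auto
    fix g assume g: "g \<in> Cinf \<and> (\<forall>w. \<bar>X w\<bar> \<noteq> \<infinity> \<longrightarrow> g w = ereal (f (real_of_ereal (X w))))"
    show "g = F"
      by (rule dense_eq[OF Cinf_cont F(1) dD]) (use g F(2) in \<open>auto simp: D_def \<phi>_def\<close>)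
  qed
  show "fcomp f X \<in> V" unfolding eq
  proof (rule V_solid[OF FC V_smul[OF E_in, of M]])
    fix w
    have "0 \<le> F w" "F w \<le> ereal M" using lo hi by auto
    then show "\<bar>F w\<bar> \<le> \<bar>csmul M cone w\<bar>" using M0 by (cases "F w") (auto simp: csmul_def cone_def)
  qed
  show "czero \<le> fcomp f X" unfolding eq czero_def le_fun_def using lo by simp
  show "continuous_on UNIV (fcomp f X)" unfolding eq by (rule F(1))
  fix w x assume "X w = ereal x"
  then show "fcomp f X w = ereal (f x)" using F(2) unfolding eq D_def \<phi>_def by simp
qed

lemma lub_part:
  fixes f :: "real \<Rightarrow> real" and M :: real
  assumes fc: "continuous_on UNIV f" and fp: "\<And>t. 0 \<le> f t" and fM: "\<And>t. f t \<le> M"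
    and ap: "approx_up fs (\<lambda>t. ereal (f t))"
  shows "is_lub_in (Es V) (range (\<lambda>n. DI V X (fs n))) (fcomp f X)"
proof -
  note fcp = fcomp_props[OF fc fp fM]
  have fsL: "fs n \<in> Lspace" for n using ap unfolding approx_up_def by auto
  have inc: "incseq (\<lambda>n. ereal (fs n t))" and lim: "(\<lambda>n. ereal (fs n t)) \<longlonglongrightarrow> ereal (f t)" for t
    using ap unfolding approx_up_def by auto
  show ?thesis unfolding is_lub_in_def
  proof (intro conjI ballI impI)
    show "fcomp f X \<in> Es V" unfolding Es_def using fcp(2,3) V_zero by blast
  next
    fix u assume "u \<in> range (\<lambda>n. DI V X (fs n))"
    then obtain n where un: "u = DI V X (fs n)" by blast
    have "\<forall>w. DI V X (fs n) w \<le> fcomp f X w"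
    proof (rule dense_le[OF DI_cont[OF fsL] fcp(3) G_dense], rule ballI)
      fix w assume "w \<in> G"
      then obtain x where x: "X w = ereal x" "w \<notin> C x" unfolding G_def by blast
      have "DI V X (fs n) w = ereal (fs n x)" by (rule DI_at[OF fsL x])
      also have "\<dots> \<le> ereal (f x)" by (rule incseq_le[OF inc lim])
      also have "\<dots> = fcomp f X w" using fcp(4)[OF x(1)] by simp
      finally show "DI V X (fs n) w \<le> fcomp f X w" .
    qed
    then show "u \<le> fcomp f X" unfolding un le_fun_def by blast
  next
    fix v assume vE: "v \<in> Es V" and ub: "\<forall>u\<in>range (\<lambda>n. DI V X (fs n)). u \<le> v"
    have cv: "continuous_on UNIV v" using vE unfolding Es_def by blast
    have "\<forall>w. fcomp f X w \<le> v w"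
    proof (rule dense_le[OF fcp(3) cv G_dense], rule ballI)
      fix w assume "w \<in> G"
      then obtain x where x: "X w = ereal x" "w \<notin> C x" unfolding G_def by blast
      have "ereal (fs n x) \<le> v w" for n
      proof -
        have "DI V X (fs n) \<le> v" using ub by blast
        then have "DI V X (fs n) w \<le> v w" by (simp add: le_fun_def)
        then show ?thesis using DI_at[OF fsL x] by simp
      qed
      then have "ereal (f x) \<le> v w" by (intro LIMSEQ_le_const2[OF lim]) auto
      then show "fcomp f X w \<le> v w" using fcp(4)[OF x(1)] by simp
    qed
    then show "fcomp f X \<le> v" unfolding le_fun_def by blast
  qed
qed

end


lemma partition_Lspace:
  fixes p :: "nat \<Rightarrow> real" and m :: nat and g :: "real \<Rightarrow> real" and c :: "nat \<Rightarrow> real"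
  assumes sm: "strict_mono p"
    and gL: "\<And>t. t \<le> p 0 \<Longrightarrow> g t = cL"
    and gR: "\<And>t. p m < t \<Longrightarrow> g t = cR"
    and gC: "\<And>i t. i < m \<Longrightarrow> p i < t \<Longrightarrow> t \<le> p (Suc i) \<Longrightarrow> g t = c i"
  shows "g \<in> Lspace"
proof -
  define cell :: "nat \<Rightarrow> real \<times> ivl" where
    "cell k = (if k = 0 then (cL, Low (p 0)) else if k = 1 then (cR, Ray (p m))
               else (c (k - 2), OC (p (k - 2)) (p (k - 1))))" for k
  define R where "R = map cell [0..<m+2]"
  have lenR: "length R = m + 2" unfolding R_def by simp
  have Rn: "R ! k = cell k" if "k < m + 2" for k unfolding R_def using that by (simp del: upt_Suc)
  have le: "p i \<le> p j" if "i \<le> j" for i j using sm that by (simp add: strict_mono_less_eq)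
  have lt: "p i < p j" if "i < j" for i j using sm that by (simp add: strict_mono_less)
  define S where "S k = ivl_set (snd (cell k))" for k
  have S0: "S 0 = {..p 0}" and S1: "S (Suc 0) = {p m<..}" and SS: "S (Suc (Suc i)) = {p i<..p (Suc i)}" for i
    unfolding S_def cell_def by auto
  have val: "fst (cell k) = g t" if "k < m + 2" "t \<in> S k" for k t
  proof (cases k)
    case 0 then show ?thesis using that gL by (simp add: S0 cell_def)
  next
    case (Suc k')
    show ?thesis
    proof (cases k')
      case 0 then show ?thesis using that gR Suc by (simp add: S1 cell_def)
    next
      case (Suc i)
      then have "k = Suc (Suc i)" "i < m" using \<open>k = Suc k'\<close> that(1) by auto
      then show ?thesis using that gC[of i t] by (simp add: SS cell_def)
    qed
  qed
  have disj: "k = k'" if "k < m + 2" "k' < m + 2" "t \<in> S k" "t \<in> S k'" for k k' t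
  proof -
    have key: "k = k'" if h1: "k \<le> k'" and h2: "k < m + 2" and h3: "k' < m + 2" and h4: "t \<in> S k" and h5: "t \<in> S k'" for k k'
    proof (rule ccontr)
      assume ne: "k \<noteq> k'"
      then have kk: "k < k'" using h1 by simp
      show False
      proof (cases k)
        case 0
        then have t0: "t \<le> p 0" using h4 S0 by auto
        show False
        proof (cases k')
          case 0 then show False using kk \<open>k = 0\<close> by simp
        next
          case (Suc j)
          show False
          proof (cases j)
            case 0 then have "p m < t" using h5 S1 Suc by auto
            then show False using t0 le[of 0 m] by simp
          next
            case (Suc i) then have "p i < t" using h5 SS \<open>k' = Suc j\<close> by auto
            then show False using t0 le[of 0 i] by simp
          qed
        qed
      next
        case (Suc j)
        then obtain i' where k': "k' = Suc (Suc i')" "i' < m" using kk h3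
          by (metis One_nat_def Suc_less_eq add_2_eq_Suc' less_Suc_eq_0_disj not_less_zero Suc_lessE)
        have t': "p i' < t" "t \<le> p (Suc i')" using h5 SS k'(1) by auto
        show False
        proof (cases j)
          case 0 then have "p m < t" using h4 S1 Suc by auto
          then show False using t'(2) le[of "Suc i'" m] k'(2) by simp
        next
          case (Suc i) then have "p i < t" "t \<le> p (Suc i)" using h4 SS \<open>k = Suc j\<close> by auto
          moreover have "i < i'" using kk k'(1) \<open>k = Suc j\<close> Suc by simp
          ultimately show False using t'(1) le[of "Suc i" i'] by simp
        qed
      qed
    qed
    show ?thesis
    proof (cases "k \<le> k'")
      case True then show ?thesis using key that by blast
    next
      case False then show ?thesis using key[of k' k] that by simp
    qed
  qed
  have cover: "\<exists>k<m+2. t \<in> S k" for t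
  proof (cases "t \<le> p 0")
    case True then show ?thesis using S0 by (intro exI[of _ 0]) auto
  next
    case False
    then have t0: "p 0 < t" by simp
    show ?thesis
    proof (cases "p m < t")
      case True then show ?thesis using S1 by (intro exI[of _ 1]) auto
    next
      case False
      then have tm: "t \<le> p m" by simp
      have m0: "m \<noteq> 0"
      proof
        assume "m = 0" then show False using t0 tm by simp
      qed
      define i where "i = (LEAST i. t \<le> p (Suc i))"
      have ex: "t \<le> p (Suc (m - 1))" using m0 tm by simp
      have i1: "t \<le> p (Suc i)" unfolding i_def by (rule LeastI[where P="\<lambda>i. t \<le> p (Suc i)", OF ex])
      have i2: "i \<le> m - 1" unfolding i_def by (rule Least_le[where P="\<lambda>i. t \<le> p (Suc i)", OF ex])
      have i3: "p i < t"
      proof (cases i)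
        case 0 then show ?thesis using t0 by simp
      next
        case (Suc j)
        then have "j < i" by simp
        then have "\<not> t \<le> p (Suc j)" unfolding i_def by (rule not_less_Least)
        then show ?thesis using Suc by simp
      qed
      show ?thesis using i1 i2 i3 m0 SS[of i] by (intro exI[of _ "Suc (Suc i)"]) auto
    qed
  qed
  have "step_rep R g"
    unfolding step_rep_def
  proof (intro conjI allI impI)
    fix i assume "i < length R"
    then have "i < m + 2" using lenR by simp
    show "ivl_ok (snd (R ! i))" using lt[of "i - 2" "i - 1"] \<open>i < m+2\<close> by (auto simp: Rn cell_def)
  next
    fix i j assume "i < length R" "j < length R" "i \<noteq> j"
    then show "ivl_set (snd (R ! i)) \<inter> ivl_set (snd (R ! j)) = {}"
      using disj[of i j] lenR Rn unfolding S_def by auto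
  next
    have "t \<in> (\<Union>i<length R. ivl_set (snd (R ! i)))" for t
    proof -
      obtain k where k: "k < m + 2" "t \<in> S k" using cover by blast
      then have "t \<in> ivl_set (snd (R ! k))" using Rn[OF k(1)] unfolding S_def by simp
      moreover have "k \<in> {..<length R}" using k(1) lenR by simp
      ultimately show ?thesis by (rule UN_I[rotated])
    qed
    then show "(\<Union>i<length R. ivl_set (snd (R ! i))) = UNIV" by blast
  next
    show "g = (\<lambda>t. \<Sum>i<length R. if t \<in> ivl_set (snd (R ! i)) then fst (R ! i) else 0)"
    proof
      fix t
      obtain k where k: "k < m + 2" "t \<in> S k" using cover by blast
      have "(\<Sum>i<length R. if t \<in> ivl_set (snd (R ! i)) then fst (R ! i) else 0)
          = (\<Sum>i<m+2. if i = k then fst (cell k) else 0)"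
      proof (rule sum.cong)
        show "{..<length R} = {..<m+2}" using lenR by simp
        fix i assume "i \<in> {..<m+2}"
        then have i: "i < m + 2" by simp
        show "(if t \<in> ivl_set (snd (R ! i)) then fst (R ! i) else 0) = (if i = k then fst (cell k) else 0)"
        proof (cases "i = k")
          case True then show ?thesis using k(2) Rn[OF i] unfolding S_def by simp
        next
          case False
          have "t \<notin> ivl_set (snd (R ! i))"
          proof
            assume "t \<in> ivl_set (snd (R ! i))"
            then have "t \<in> S i" using Rn[OF i] unfolding S_def by simp
            then have "i = k" by (rule disj[OF i k(1) _ k(2)])
            with False show False by simp
          qed
          then show ?thesis using False by simp
        qed
      qed
      also have "\<dots> = fst (cell k)" using k(1) by simp
      also have "\<dots> = g t" using val k by simp
      finally show "g t = (\<Sum>i<length R. if t \<in> ivl_set (snd (R ! i)) then fst (R ! i) else 0)" by simp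
    qed
  qed
  then show ?thesis unfolding Lspace_def by blast
qed


lemma lo_bounds:
  fixes n :: nat and t :: real
  shows "(of_int \<lceil>2^n * t\<rceil> - 1) / (2::real)^n < t" "t \<le> (of_int \<lceil>2^n * t\<rceil> - 1) / (2::real)^n + 1 / (2::real)^n"
proof -
  have c: "of_int \<lceil>2^n * t\<rceil> - 1 < 2^n * t" "2^n * t \<le> of_int \<lceil>2^n * t\<rceil>"
    using ceiling_correct[of "2^n * t"] by auto
  have p: "(0::real) < (2::real)^n" by simp
  show "(of_int \<lceil>2^n * t\<rceil> - 1) / (2::real)^n < t" using c(1) p by (simp add: divide_less_eq mult.commute)
  have "(of_int \<lceil>2^n * t\<rceil> - 1) / (2::real)^n + 1 / (2::real)^n = of_int \<lceil>2^n * t\<rceil> / (2::real)^n"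
    by (simp add: field_simps)
  moreover have "t \<le> of_int \<lceil>2^n * t\<rceil> / (2::real)^n" using c(2) p by (simp add: le_divide_eq mult.commute)
  ultimately show "t \<le> (of_int \<lceil>2^n * t\<rceil> - 1) / (2::real)^n + 1 / (2::real)^n" by simp
qed

lemma lo_cell:
  fixes n i :: nat and t :: real
  assumes "- real n + real i / (2::real)^n < t" "t \<le> - real n + real (Suc i) / (2::real)^n"
  shows "(of_int \<lceil>2^n * t\<rceil> - 1) / (2::real)^n = - real n + real i / (2::real)^n"
proof -
  have p: "(0::real) < (2::real)^n" by simp
  have a: "- real n * 2^n + real i < 2^n * t"
    using assms(1) p by (simp add: field_simps)
  have b: "2^n * t \<le> - real n * 2^n + real i + 1"
    using assms(2) p by (simp add: field_simps)
  have "\<lceil>2^n * t\<rceil> = - int n * 2^n + int i + 1"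
    unfolding ceiling_eq_iff using a b by simp
  then have "of_int \<lceil>2^n * t\<rceil> - 1 = - real n * 2^n + real i" by simp
  then show ?thesis using p by (simp add: field_simps)
qed

lemma ceil_double:
  fixes u :: real
  shows "\<lceil>2 * u\<rceil> \<le> 2 * \<lceil>u\<rceil>" "2 * \<lceil>u\<rceil> - 1 \<le> \<lceil>2 * u\<rceil>"
proof -
  show "\<lceil>2 * u\<rceil> \<le> 2 * \<lceil>u\<rceil>" unfolding ceiling_le_iff using le_of_int_ceiling[of u] by simp
  have "of_int \<lceil>u\<rceil> - 1 < u" using ceiling_correct[of u] by simp
  then have "2 * of_int \<lceil>u\<rceil> - 2 < 2 * u" by simp
  then have "of_int (2 * \<lceil>u\<rceil> - 1) - 1 < 2 * u" by simp
  then show "2 * \<lceil>u\<rceil> - 1 \<le> \<lceil>2 * u\<rceil>" unfolding le_ceiling_iff .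
qed

lemma dyadic_step:
  fixes a b :: real and N :: real
  assumes N: "0 < N" and ab: "2 * a - 1 \<le> b"
  shows "(a - 1) / N \<le> (b - 1) / (2 * N)"
proof -
  have "(a - 1) / N = (2 * a - 2) / (2 * N)" using N by (simp add: field_simps)
  also have "\<dots> \<le> (b - 1) / (2 * N)" using ab N by (intro divide_right_mono) auto
  finally show ?thesis .
qed

lemma dyadic_step2:
  fixes a b :: real and N :: real
  assumes N: "0 < N" and ab: "b \<le> 2 * a"
  shows "(b - 1) / (2 * N) + 1 / (2 * N) \<le> (a - 1) / N + 1 / N"
proof -
  have "(b - 1) / (2 * N) + 1 / (2 * N) = b / (2 * N)" using N by (simp add: field_simps)
  also have "\<dots> \<le> (2 * a) / (2 * N)" using ab N by (intro divide_right_mono) auto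
  also have "\<dots> = (a - 1) / N + 1 / N" using N by (simp add: field_simps)
  finally show ?thesis .
qed

lemma Lup_f:
  fixes f :: "real \<Rightarrow> real"
  assumes fc: "continuous_on UNIV f" and fp: "\<forall>t. 0 \<le> f t"
  shows "(\<lambda>t. ereal (f t)) \<in> Lup"
proof -
  define mf where "mf a b = Inf (f ` {a..b})" for a b
  have bdd: "bdd_below (f ` {a..b})" for a b
    by (rule bounded_imp_bdd_below[OF compact_imp_bounded[OF compact_continuous_image[OF continuous_on_subset[OF fc] compact_Icc]]]) simp
  have mf_le: "mf a b \<le> f y" if "a \<le> y" "y \<le> b" for a b y
    unfolding mf_def using that by (intro cInf_lower[OF _ bdd]) auto
  have mf_ge: "c \<le> mf a b" if "a \<le> b" "\<forall>y\<in>{a..b}. c \<le> f y" for a b c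
    unfolding mf_def using that by (intro cInf_greatest) auto
  have mf_mono: "mf a b \<le> mf a' b'" if "a \<le> a'" "a' \<le> b'" "b' \<le> b" for a b a' b'
    unfolding mf_def using that by (intro cInf_superset_mono[OF _ bdd]) auto
  have mf_nn: "0 \<le> mf a b" if "a \<le> b" for a b using mf_ge[OF that] fp by auto
  define lo where "lo n t = (of_int \<lceil>2^n * t\<rceil> - 1) / (2::real)^n" for n :: nat and t :: real
  define gs where "gs n t = (if - real n < t \<and> t \<le> real n then mf (lo n t) (lo n t + 1 / (2::real)^n) else 0)" for n t
  have lo1: "lo n t < t" and lo2: "t \<le> lo n t + 1/(2::real)^n" for n t unfolding lo_def using lo_bounds by auto
  have gsL: "gs n \<in> Lspace" for n
  proof -
    define p where "p i = - real n + real i / (2::real)^n" for i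
    define m where "m = 2 * n * 2^n"
    have sm: "strict_mono p" unfolding p_def by (rule strict_monoI) (simp add: divide_strict_right_mono)
    have p0: "p 0 = - real n" unfolding p_def by simp
    have pm: "p m = real n" unfolding p_def m_def by simp
    show ?thesis
    proof (rule partition_Lspace[OF sm, where cL=0 and cR=0 and c="\<lambda>i. mf (p i) (p (Suc i))"])
      fix t assume "t \<le> p 0" then show "gs n t = 0" unfolding gs_def p0 by simp
    next
      fix t assume "p m < t" then show "gs n t = 0" unfolding gs_def pm by simp
    next
      fix i t assume i: "i < m" and t: "p i < t" "t \<le> p (Suc i)"
      have "p 0 \<le> p i" "p (Suc i) \<le> p m" using sm i by (simp_all add: strict_mono_less_eq)
      then have r: "- real n < t" "t \<le> real n" using t p0 pm by auto
      have "lo n t = p i" unfolding lo_def p_def by (rule lo_cell) (use t in \<open>simp_all add: p_def\<close>)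
      moreover have "p i + 1/(2::real)^n = p (Suc i)" unfolding p_def by (simp add: add_divide_distrib)
      ultimately show "gs n t = mf (p i) (p (Suc i))" unfolding gs_def using r by simp
    qed
  qed
  have inc: "gs n t \<le> gs (Suc n) t" for n t
  proof (cases "- real n < t \<and> t \<le> real n")
    case False
    have "0 \<le> gs (Suc n) t" unfolding gs_def using mf_nn by simp
    moreover have "gs n t = 0" unfolding gs_def by (rule if_not_P[OF False])
    ultimately show ?thesis by simp
  next
    case True
    then have T2: "- real (Suc n) < t \<and> t \<le> real (Suc n)" by auto
    define N where "N = (2::real)^n"
    have N: "0 < N" unfolding N_def by simp
    define u where "u = 2^n * t"
    have lon: "lo n t = (of_int \<lceil>u\<rceil> - 1) / N" unfolding lo_def N_def u_def by simp
    have los: "lo (Suc n) t = (of_int \<lceil>2 * u\<rceil> - 1) / (2 * N)" unfolding lo_def N_def u_def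
      by (simp add: mult.assoc)
    have c1: "real_of_int (2 * \<lceil>u\<rceil> - 1) \<le> real_of_int \<lceil>2 * u\<rceil>" using ceil_double(2)[of u] by (simp only: of_int_le_iff)
    have c2: "real_of_int \<lceil>2 * u\<rceil> \<le> real_of_int (2 * \<lceil>u\<rceil>)" using ceil_double(1)[of u] by (simp only: of_int_le_iff)
    have l: "lo n t \<le> lo (Suc n) t" unfolding lon los by (rule dyadic_step[OF N]) (use c1 in simp)
    have r: "lo (Suc n) t + 1 / (2::real)^(Suc n) \<le> lo n t + 1 / (2::real)^n"
      unfolding lon los using dyadic_step2[OF N, of "of_int \<lceil>2 * u\<rceil>" "of_int \<lceil>u\<rceil>"] c2 by (simp add: N_def)
    have m: "lo (Suc n) t \<le> lo (Suc n) t + 1 / (2::real)^(Suc n)" by simp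
    have "mf (lo n t) (lo n t + 1 / (2::real)^n) \<le> mf (lo (Suc n) t) (lo (Suc n) t + 1 / (2::real)^(Suc n))"
      by (rule mf_mono[OF l m r])
    then show ?thesis using True T2 unfolding gs_def by simp
  qed
  have lim: "(\<lambda>n. gs n t) \<longlonglongrightarrow> f t" for t
  proof (rule LIMSEQ_I)
    fix r :: real assume r: "0 < r"
    obtain d where d: "0 < d" "\<forall>y. dist y t < d \<longrightarrow> dist (f y) (f t) < r / 2"
      using fc r unfolding continuous_on_iff by (metis UNIV_I half_gt_zero)
    obtain N1 :: nat where N1: "\<bar>t\<bar> < real N1" using reals_Archimedean2 by blast
    obtain N2 :: nat where N2: "(1/2::real)^N2 < d" using real_arch_pow_inv[OF d(1), of "1/2"] by auto
    show "\<exists>no. \<forall>n\<ge>no. norm (gs n t - f t) < r"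
    proof (intro exI allI impI)
      fix n assume n: "max N1 N2 \<le> n"
      have inr: "- real n < t \<and> t \<le> real n" using N1 n by auto
      have h: "1 / (2::real)^n < d"
      proof -
        have "(1/2::real)^n \<le> (1/2)^N2" using n by (intro power_decreasing) auto
        then show ?thesis using N2 by (simp add: power_one_over)
      qed
      have g: "gs n t = mf (lo n t) (lo n t + 1 / (2::real)^n)" unfolding gs_def using inr by simp
      have up: "gs n t \<le> f t" unfolding g by (rule mf_le) (use lo1[where n=n and t=t] lo2[where n=n and t=t] in auto)
      have "f t - r / 2 \<le> gs n t" unfolding g
      proof (rule mf_ge)
        show "lo n t \<le> lo n t + 1 / (2::real)^n" by simp
        show "\<forall>y\<in>{lo n t..lo n t + 1 / 2 ^ n}. f t - r / 2 \<le> f y"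
        proof
          fix y assume "y \<in> {lo n t..lo n t + 1 / 2 ^ n}"
          then have "dist y t < d" using lo1[where n=n and t=t] lo2[where n=n and t=t] h by (auto simp: dist_real_def)
          then have "dist (f y) (f t) < r / 2" using d(2) by blast
          then show "f t - r / 2 \<le> f y" unfolding dist_real_def by linarith
        qed
      qed
      then show "norm (gs n t - f t) < r" using up r by simp
    qed
  qed
  have "approx_up gs (\<lambda>t. ereal (f t))"
    unfolding approx_up_def
  proof (intro conjI allI)
    fix n show "gs n \<in> Lspace" by (rule gsL)
  next
    fix t show "incseq (\<lambda>n. ereal (gs n t))" by (rule incseq_SucI) (simp add: inc)
  next
    fix t show "(\<lambda>n. ereal (gs n t)) \<longlonglongrightarrow> ereal (f t)" by (rule tendsto_ereal[OF lim])
  qed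
  then show ?thesis unfolding Lup_def by blast
qed

lemma supp_bound:
  fixes f :: "real \<Rightarrow> real"
  assumes fc: "continuous_on UNIV f" and b: "bounded (closure {t. f t \<noteq> 0})"
  shows "\<exists>M. \<forall>t. f t \<le> M"
proof -
  define S where "S = closure {t. f t \<noteq> 0}"
  have "compact S" unfolding S_def using b by (simp add: compact_eq_bounded_closed)
  then have "bounded (f ` S)" by (rule compact_imp_bounded[OF compact_continuous_image[OF continuous_on_subset[OF fc subset_UNIV]]])
  then obtain B where B: "\<forall>x\<in>f ` S. \<bar>x\<bar> \<le> B" unfolding bounded_real by blast
  have "f t \<le> max B 0" for t
  proof (cases "t \<in> S")
    case True then have "\<bar>f t\<bar> \<le> B" using B by blast
    then have "f t \<le> B" by simp
    then show ?thesis by simp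
  next
    case False
    have sub: "{t. f t \<noteq> 0} \<subseteq> S" unfolding S_def by (rule closure_subset)
    have "t \<notin> {t. f t \<noteq> 0}"
    proof
      assume "t \<in> {t. f t \<noteq> 0}" then have "t \<in> S" using sub by (rule subsetD[rotated])
      then show False using False by simp
    qed
    then show ?thesis by simp
  qed
  then show ?thesis by blast
qed

theorem mainTheorem5:
  fixes V :: "('k::t2_space \<Rightarrow> ereal) set"
    and X :: "'k \<Rightarrow> ereal"
    and f :: "real \<Rightarrow> real"
  assumes K_compact: "compact (UNIV :: 'k set)"
    and K_extr_disc: "\<forall>U::'k set. open U \<longrightarrow> open (closure U)"
    and V_ideal: "ideal_in Cinf V"
    and V_order_dense: "\<forall>g\<in>Cinf. czero \<le> g \<and> g \<noteq> czero \<longrightarrow> (\<exists>h\<in>V. czero \<le> h \<and> h \<noteq> czero \<and> h \<le> g)"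
    and V_order_complete: "\<forall>S. S \<subseteq> V \<and> S \<noteq> {} \<and> (\<exists>b\<in>V. \<forall>s\<in>S. s \<le> b) \<longrightarrow> (\<exists>u. is_lub_in V S u)"
    and E_in: "cone \<in> V"
    and X_in: "X \<in> V"
    and f_cont: "continuous_on UNIV f"
    and f_pos: "\<forall>t. 0 \<le> f t"
    and f_supp: "bounded (closure {t. f t \<noteq> 0})"
  shows "(\<lambda>t. ereal (f t)) \<in> Lup
    \<and> (\<forall>fs. approx_up fs (\<lambda>t. ereal (f t)) \<longrightarrow>
          is_lub_in (Es V) (range (\<lambda>n. DI V X (fs n))) (fcomp f X))
    \<and> fcomp f X \<in> V \<and> czero \<le> fcomp f X"
proof -
  interpret setting V X
    by (rule setting.intro[OF K_compact K_extr_disc V_ideal E_in X_in])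
  obtain M where M: "\<forall>t. f t \<le> M" using supp_bound[OF f_cont f_supp] by blast
  have fp: "\<And>t. 0 \<le> f t" using f_pos by blast
  have fM: "\<And>t. f t \<le> M" using M by blast
  note fcp = fcomp_props[OF f_cont fp fM]
  show ?thesis
  proof (intro conjI allI impI)
    show "(\<lambda>t. ereal (f t)) \<in> Lup" by (rule Lup_f[OF f_cont f_pos])
    fix fs assume "approx_up fs (\<lambda>t. ereal (f t))"
    then show "is_lub_in (Es V) (range (\<lambda>n. DI V X (fs n))) (fcomp f X)" by (rule lub_part[OF f_cont fp fM])
  next
    show "fcomp f X \<in> V" by (rule fcp(1))
    show "czero \<le> fcomp f X" by (rule fcp(2))
  qed
qed


end
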